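(* Let $n\ge 1$ and $1\le p\le n$ be integers. The number of $p$-toppleable configurations in $\mathcal{S}(n,p)$ equals $\tfrac12 B_{n-p+1,p}$.
   Context: Sites are the integers $0,1,\dots,n+1$. A configuration in $\mathcal{S}(n,p)$ is a placement of $n+1$ distinct chips labeled $1,\dots,n+1$ such that sites $0$ and $n+1$ are empty, every site $i\in\{1,\dots,n\}\setminus\{p\}$ holds exactly one chip, and site $p$ holds exactly two chips. Toppling: while some site holds at least two chips, choose such a site $i$ and two chips $\alpha<\beta$ at site $i$, and move $\alpha$ to site $i-1$ and $\beta$ to site $i+1$. It is known that this process terminates with all chips in sites $0,\dots,n+1$, every site holding at most one chip (so exactly one site is empty), and that the final configuration does not depend on the choices made. Reading the chip labels of the final configuration from left to right gives a permutation of $[n+1]$; a configuration is $p$-toppleable if this permutation is the identity $12\cdots(n+1)$. The poly-Bernoulli numbers of type B, $B_{n,k}$ ($n,k\ge 0$), are defined by $\sum_{n\ge 0}B_{n,k}\frac{x^n}{n!}=\frac{\mathrm{Li}_{-k}(1-e^{-x})}{1-e^{-x}}$, where $\mathrm{Li}_s(z)=\sum_{i\ge1}z^i/i^s$; equivalently $B_{n,k}=\sum_{m=0}^{\min(n,k)}(m!)^2\left\{{n+1\atop m+1}\right\}\left\{{k+1\atop m+1}\right\}$ with Stirling numbers of the second kind. *)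

theory Defs
  imports Complex_Main "HOL-Combinatorics.Stirling" "HOL-Library.FuncSet"
begin

text \<open>A configuration is a map from chips {1..n+1} to sites (integers), extensional
  outside the chip set.\<close>

definition chips :: "nat \<Rightarrow> nat set" where
  "chips n = {1..n+1}"

definition chips_at :: "nat \<Rightarrow> (nat \<Rightarrow> int) \<Rightarrow> int \<Rightarrow> nat set" where
  "chips_at n c s = {a \<in> chips n. c a = s}"

definition config_S :: "nat \<Rightarrow> nat \<Rightarrow> (nat \<Rightarrow> int) \<Rightarrow> bool" where
  "config_S n p c \<longleftrightarrow>
     c \<in> chips n \<rightarrow>\<^sub>E {0..int n + 1} \<and>
     card (chips_at n c 0) = 0 \<and> card (chips_at n c (int n + 1)) = 0 \<and>
     card (chips_at n c (int p)) = 2 \<and>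
     (\<forall>s \<in> {1..int n} - {int p}. card (chips_at n c s) = 1)"

definition topple_step :: "nat \<Rightarrow> (nat \<Rightarrow> int) \<Rightarrow> (nat \<Rightarrow> int) \<Rightarrow> bool" where
  "topple_step n c c' \<longleftrightarrow>
     (\<exists>\<alpha> \<in> chips n. \<exists>\<beta> \<in> chips n. \<alpha> < \<beta> \<and> c \<alpha> = c \<beta> \<and>
        c' = c(\<alpha> := c \<alpha> - 1, \<beta> := c \<beta> + 1))"

text \<open>Final configuration reads 1 2 ... (n+1) left to right (hence every site holds
  at most one chip, i.e. it is stable).\<close>
definition identity_final :: "nat \<Rightarrow> (nat \<Rightarrow> int) \<Rightarrow> bool" where
  "identity_final n c \<longleftrightarrow> (\<forall>a \<in> chips n. \<forall>b \<in> chips n. a < b \<longrightarrow> c a < c b)"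

text \<open>p-toppleable: the toppling process (whose final configuration is known to be
  independent of choices) ends in the identity permutation.\<close>
definition toppleable :: "nat \<Rightarrow> (nat \<Rightarrow> int) \<Rightarrow> bool" where
  "toppleable n c \<longleftrightarrow> (\<exists>c'. (topple_step n)\<^sup>*\<^sup>* c c' \<and> identity_final n c')"

definition polyB :: "nat \<Rightarrow> nat \<Rightarrow> nat" where
  "polyB n k = (\<Sum>m = 0..min n k. (fact m)^2 * Stirling (n+1) (m+1) * Stirling (k+1) (m+1))"

end

theory Submission
  imports Defs
begin

definition nz :: "nat \<Rightarrow> (nat \<Rightarrow> nat) \<Rightarrow> nat set" where
  "nz k f = {a \<in> {1..k}. f a \<noteq> 0}"

definition Rk :: "nat \<Rightarrow> nat \<Rightarrow> (nat \<Rightarrow> nat) set" where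
  "Rk k r = {f \<in> {1..k} \<rightarrow>\<^sub>E {0..k}. (\<forall>a \<in> {1..k}. f a \<le> a) \<and> inj_on f (nz k f) \<and> card (nz k f) = r}"

lemma finite_nz[simp]: "finite (nz k f)" by (simp add: nz_def)

lemma finite_Rk[simp]: "finite (Rk k r)"
proof -
  have "Rk k r \<subseteq> {1..k} \<rightarrow>\<^sub>E {0..k}" by (auto simp: Rk_def)
  moreover have "finite ({1..k} \<rightarrow>\<^sub>E {0..k})" by (simp add: finite_PiE)
  ultimately show ?thesis by (rule finite_subset)
qed

lemma Rk_0: "card (Rk 0 r) = (if r = 0 then 1 else 0)"
proof -
  have "Rk 0 r = (if r = 0 then {\<lambda>_. undefined} else {})"
    by (auto simp: Rk_def nz_def PiE_def extensional_def)
  then show ?thesis by simp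
qed

lemma Rk_Suc_zero: "card {f \<in> Rk (Suc k) r. f (Suc k) = 0} = card (Rk k r)"
proof -
  have "bij_betw (\<lambda>f. restrict f {1..k}) {f \<in> Rk (Suc k) r. f (Suc k) = 0} (Rk k r)"
  proof (rule bij_betw_byWitness[where f'="\<lambda>g. g(Suc k := 0)"])
    show "\<forall>f\<in>{f \<in> Rk (Suc k) r. f (Suc k) = 0}. (restrict f {1..k})(Suc k := 0) = f"
    proof
      fix f assume f: "f \<in> {f \<in> Rk (Suc k) r. f (Suc k) = 0}"
      then have "f \<in> extensional {1..Suc k}" by (auto simp: Rk_def PiE_def)
      then show "(restrict f {1..k})(Suc k := 0) = f" using f
        by (intro ext) (auto simp: extensional_def)
    qed
    show "\<forall>g\<in>Rk k r. restrict (g(Suc k := 0)) {1..k} = g"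
    proof
      fix g assume g: "g \<in> Rk k r"
      then have "g \<in> extensional {1..k}" by (auto simp: Rk_def PiE_def)
      then show "restrict (g(Suc k := 0)) {1..k} = g"
        by (intro ext) (auto simp: extensional_def)
    qed
    show "(\<lambda>f. restrict f {1..k}) ` {f \<in> Rk (Suc k) r. f (Suc k) = 0} \<subseteq> Rk k r"
    proof
      fix h assume "h \<in> (\<lambda>f. restrict f {1..k}) ` {f \<in> Rk (Suc k) r. f (Suc k) = 0}"
      then obtain f where f: "f \<in> Rk (Suc k) r" "f (Suc k) = 0" and h: "h = restrict f {1..k}" by auto
      have nzeq: "nz k h = nz (Suc k) f" using f(2) by (auto simp: nz_def h le_Suc_eq)
      have "\<forall>a \<in> {1..k}. h a \<le> a" using f(1) by (auto simp: Rk_def h)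
      moreover have "h \<in> {1..k} \<rightarrow>\<^sub>E {0..k}"
      proof -
        have "\<forall>a \<in> {1..k}. f a \<le> a" using f(1) by (auto simp: Rk_def)
        then have "\<forall>a \<in> {1..k}. f a \<le> k"
        proof (intro ballI)
          fix a assume "\<forall>a \<in> {1..k}. f a \<le> a" "a \<in> {1..k}"
          then have "f a \<le> a" "a \<le> k" by auto
          then show "f a \<le> k" by linarith
        qed
        then show ?thesis by (auto simp: h PiE_def Pi_def)
      qed
      moreover have "inj_on h (nz k h)"
      proof -
        have "inj_on f (nz (Suc k) f)" using f(1) by (simp add: Rk_def)
        moreover have "\<forall>a \<in> nz k h. h a = f a" by (auto simp: h nz_def)
        ultimately show ?thesis using nzeq by (metis inj_on_cong)
      qed
      moreover have "card (nz k h) = r" using nzeq f(1) by (simp add: Rk_def)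
      ultimately show "h \<in> Rk k r" by (simp add: Rk_def)
    qed
    show "(\<lambda>g. g(Suc k := 0)) ` Rk k r \<subseteq> {f \<in> Rk (Suc k) r. f (Suc k) = 0}"
    proof
      fix h assume "h \<in> (\<lambda>g. g(Suc k := 0)) ` Rk k r"
      then obtain g where g: "g \<in> Rk k r" and h: "h = g(Suc k := 0)" by auto
      have nzeq: "nz (Suc k) h = nz k g" by (auto simp: nz_def h)
      have "h \<in> {1..Suc k} \<rightarrow>\<^sub>E {0..Suc k}" using g by (auto simp: h Rk_def PiE_def Pi_def extensional_def)
      moreover have "\<forall>a \<in> {1..Suc k}. h a \<le> a" using g by (auto simp: h Rk_def)
      moreover have "inj_on h (nz (Suc k) h)"
      proof -
        have "inj_on g (nz k g)" using g by (simp add: Rk_def)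
        moreover have "\<forall>a \<in> nz k g. h a = g a" by (auto simp: h nz_def)
        ultimately show ?thesis using nzeq by (metis inj_on_cong)
      qed
      moreover have "card (nz (Suc k) h) = r" using nzeq g by (simp add: Rk_def)
      ultimately show "h \<in> {f \<in> Rk (Suc k) r. f (Suc k) = 0}" by (simp add: Rk_def h)
    qed
  qed
  then show ?thesis by (rule bij_betw_same_card)
qed

lemma Rk_Suc_nz:
  assumes r1: "1 \<le> r"
  shows "card {f \<in> Rk (Suc k) r. f (Suc k) \<noteq> 0} = card (Rk k (r - 1)) * (Suc k - (r - 1))"
proof -
  define T where "T = Sigma (Rk k (r - 1)) (\<lambda>g. {1..Suc k} - g ` nz k g)"
  have "bij_betw (\<lambda>f. (restrict f {1..k}, f (Suc k))) {f \<in> Rk (Suc k) r. f (Suc k) \<noteq> 0} T"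
  proof (rule bij_betw_byWitness[where f'="\<lambda>(g, j). g(Suc k := j)"])
    show "\<forall>f\<in>{f \<in> Rk (Suc k) r. f (Suc k) \<noteq> 0}. (\<lambda>(g, j). g(Suc k := j)) (restrict f {1..k}, f (Suc k)) = f"
    proof
      fix f assume f: "f \<in> {f \<in> Rk (Suc k) r. f (Suc k) \<noteq> 0}"
      then have "f \<in> extensional {1..Suc k}" by (auto simp: Rk_def PiE_def)
      then show "(\<lambda>(g, j). g(Suc k := j)) (restrict f {1..k}, f (Suc k)) = f"
        by (intro ext) (auto simp: extensional_def le_Suc_eq)
    qed
    show "\<forall>gj\<in>T. (\<lambda>f. (restrict f {1..k}, f (Suc k))) ((\<lambda>(g, j). g(Suc k := j)) gj) = gj"
    proof
      fix gj assume gj: "gj \<in> T"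
      obtain g j where gjd: "gj = (g, j)" by fastforce
      have "g \<in> Rk k (r - 1)" using gj gjd by (simp add: T_def)
      then have "g \<in> extensional {1..k}" by (auto simp: Rk_def PiE_def)
      then have "restrict (g(Suc k := j)) {1..k} = g" by (intro ext) (auto simp: extensional_def)
      then show "(\<lambda>f. (restrict f {1..k}, f (Suc k))) ((\<lambda>(g, j). g(Suc k := j)) gj) = gj"
        using gjd by simp
    qed
    show "(\<lambda>f. (restrict f {1..k}, f (Suc k))) ` {f \<in> Rk (Suc k) r. f (Suc k) \<noteq> 0} \<subseteq> T"
    proof
      fix x assume "x \<in> (\<lambda>f. (restrict f {1..k}, f (Suc k))) ` {f \<in> Rk (Suc k) r. f (Suc k) \<noteq> 0}"
      then obtain f where f: "f \<in> Rk (Suc k) r" "f (Suc k) \<noteq> 0" and x: "x = (restrict f {1..k}, f (Suc k))" by auto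
      define h where "h = restrict f {1..k}"
      have fle: "\<forall>a \<in> {1..Suc k}. f a \<le> a" using f(1) by (simp add: Rk_def)
      have finj: "inj_on f (nz (Suc k) f)" using f(1) by (simp add: Rk_def)
      have fcard: "card (nz (Suc k) f) = r" using f(1) by (simp add: Rk_def)
      have nzS: "nz (Suc k) f = insert (Suc k) (nz k h)" using f(2) by (auto simp: nz_def h_def le_Suc_eq)
      have Snot: "Suc k \<notin> nz k h" by (simp add: nz_def)
      have hk: "\<forall>a \<in> {1..k}. h a \<le> a" using fle by (auto simp: h_def)
      have hpi: "h \<in> {1..k} \<rightarrow>\<^sub>E {0..k}"
      proof -
        have "\<forall>a \<in> {1..k}. f a \<le> k"
        proof (intro ballI)
          fix a assume "a \<in> {1..k}"
          then have "f a \<le> a" "a \<le> k" using fle by auto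
          then show "f a \<le> k" by linarith
        qed
        then show ?thesis by (auto simp: h_def PiE_def Pi_def)
      qed
      have eqon: "\<forall>a \<in> nz k h. h a = f a" by (auto simp: h_def nz_def)
      have hinj: "inj_on h (nz k h)"
      proof -
        have "inj_on f (nz k h)" using finj nzS by (metis inj_on_insert)
        then show ?thesis using eqon by (metis inj_on_cong)
      qed
      have hcard: "card (nz k h) = r - 1" using fcard nzS Snot by simp
      have hR: "h \<in> Rk k (r - 1)" using hk hpi hinj hcard by (simp add: Rk_def)
      have jrange: "f (Suc k) \<in> {1..Suc k}" using f(2) fle by auto
      have jnot: "f (Suc k) \<notin> h ` nz k h"
      proof
        assume "f (Suc k) \<in> h ` nz k h"
        then obtain a where a: "a \<in> nz k h" "f (Suc k) = h a" by auto
        then have "f (Suc k) = f a" using eqon by simp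
        moreover have "a \<in> nz (Suc k) f" "Suc k \<in> nz (Suc k) f" using a nzS by auto
        ultimately have "Suc k = a" using finj by (metis inj_onD)
        then show False using a(1) Snot by simp
      qed
      show "x \<in> T" using x hR jrange jnot by (simp add: T_def h_def)
    qed
    show "(\<lambda>(g, j). g(Suc k := j)) ` T \<subseteq> {f \<in> Rk (Suc k) r. f (Suc k) \<noteq> 0}"
    proof
      fix f assume "f \<in> (\<lambda>(g, j). g(Suc k := j)) ` T"
      then obtain g j where gj: "(g, j) \<in> T" and f: "f = g(Suc k := j)" by auto
      have gR: "g \<in> Rk k (r - 1)" and j: "j \<in> {1..Suc k}" "j \<notin> g ` nz k g" using gj by (auto simp: T_def)
      have gle: "\<forall>a \<in> {1..k}. g a \<le> a" and ginj: "inj_on g (nz k g)" and gcard: "card (nz k g) = r - 1"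
        and gpi: "g \<in> {1..k} \<rightarrow>\<^sub>E {0..k}" using gR by (auto simp: Rk_def)
      have nzS: "nz (Suc k) f = insert (Suc k) (nz k g)" using j by (auto simp: nz_def f le_Suc_eq)
      have Snot: "Suc k \<notin> nz k g" by (simp add: nz_def)
      have eqon: "\<forall>a \<in> nz k g. f a = g a" by (auto simp: f nz_def)
      have fpi: "f \<in> {1..Suc k} \<rightarrow>\<^sub>E {0..Suc k}" using gpi j by (auto simp: f PiE_def Pi_def extensional_def)
      have fle: "\<forall>a \<in> {1..Suc k}. f a \<le> a" using gle j by (auto simp: f le_Suc_eq)
      have finj: "inj_on f (nz (Suc k) f)"
      proof -
        have "inj_on f (nz k g)" using ginj eqon by (metis inj_on_cong)
        moreover have "f (Suc k) \<notin> f ` (nz k g)" using j eqon by (auto simp: f)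
        ultimately show ?thesis using nzS Snot by simp
      qed
      have fcard: "card (nz (Suc k) f) = r" using nzS Snot gcard r1 by simp
      show "f \<in> {f \<in> Rk (Suc k) r. f (Suc k) \<noteq> 0}" using fpi fle finj fcard j by (simp add: Rk_def f)
    qed
  qed
  then have "card {f \<in> Rk (Suc k) r. f (Suc k) \<noteq> 0} = card T" by (rule bij_betw_same_card)
  also have "card T = (\<Sum>g \<in> Rk k (r - 1). card ({1..Suc k} - g ` nz k g))"
    unfolding T_def by (rule card_SigmaI) auto
  also have "\<dots> = (\<Sum>g \<in> Rk k (r - 1). Suc k - (r - 1))"
  proof (rule sum.cong[OF refl])
    fix g assume g: "g \<in> Rk k (r - 1)"
    have sub: "g ` nz k g \<subseteq> {1..Suc k}"
    proof
      fix y assume "y \<in> g ` nz k g"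
      then obtain a where a: "a \<in> nz k g" "y = g a" by auto
      have "g a \<le> a" "a \<le> k" "g a \<noteq> 0" using a g by (auto simp: Rk_def nz_def)
      then show "y \<in> {1..Suc k}" using a by simp
    qed
    have "card (g ` nz k g) = r - 1" using g by (simp add: Rk_def card_image)
    then show "card ({1..Suc k} - g ` nz k g) = Suc k - (r - 1)"
      using sub by (simp add: card_Diff_subset)
  qed
  also have "\<dots> = card (Rk k (r - 1)) * (Suc k - (r - 1))" by simp
  finally show ?thesis .
qed

lemma Rk_card: "card (Rk k r) = Stirling (Suc k) (Suc k - r)"
proof (induction k arbitrary: r)
  case 0
  then show ?case by (simp add: Rk_0)
next
  case (Suc k)
  have split: "Rk (Suc k) r = {f \<in> Rk (Suc k) r. f (Suc k) = 0} \<union> {f \<in> Rk (Suc k) r. f (Suc k) \<noteq> 0}" by auto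
  have "card (Rk (Suc k) r) = card {f \<in> Rk (Suc k) r. f (Suc k) = 0} + card {f \<in> Rk (Suc k) r. f (Suc k) \<noteq> 0}"
    by (subst split, rule card_Un_disjoint) auto
  also have "\<dots> = card (Rk k r) + card {f \<in> Rk (Suc k) r. f (Suc k) \<noteq> 0}" by (simp add: Rk_Suc_zero)
  finally have c: "card (Rk (Suc k) r) = card (Rk k r) + card {f \<in> Rk (Suc k) r. f (Suc k) \<noteq> 0}" .
  show ?case
  proof (cases "r = 0")
    case True
    have "{f \<in> Rk (Suc k) r. f (Suc k) \<noteq> 0} = {}"
    proof -
      have "f (Suc k) = 0" if "f \<in> Rk (Suc k) 0" for f
      proof (rule ccontr)
        assume "f (Suc k) \<noteq> 0"
        then have "Suc k \<in> nz (Suc k) f" by (simp add: nz_def)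
        then have "card (nz (Suc k) f) \<noteq> 0" by auto
        then show False using that by (simp add: Rk_def)
      qed
      then show ?thesis using True by auto
    qed
    then show ?thesis using c Suc True by simp
  next
    case False
    then have r1: "1 \<le> r" by simp
    have c2: "card (Rk (Suc k) r) = Stirling (Suc k) (Suc k - r) + Stirling (Suc k) (Suc k - (r - 1)) * (Suc k - (r - 1))"
      using c Rk_Suc_nz[OF r1, of k] Suc.IH by simp
    show ?thesis
    proof (cases "r \<le> Suc k")
      case True
      define j where "j = Suc k - r"
      have e1: "Suc (Suc k) - r = Suc j" using True by (simp add: j_def)
      have e2: "Suc k - (r - 1) = Suc j" using True r1 by (simp add: j_def)
      show ?thesis using c2 e1 e2 by (simp add: j_def)
    next
      case False
      then have "Suc (Suc k) - r = 0" "Suc k - r = 0" "Suc k - (r - 1) = 0" by auto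
      then show ?thesis using c2 by simp
    qed
  qed
qed

definition Perm :: "nat \<Rightarrow> nat \<Rightarrow> (nat \<Rightarrow> nat) set" where
  "Perm h p = {\<sigma> \<in> {1..h+p} \<rightarrow>\<^sub>E {1..h+p}. inj_on \<sigma> {1..h+p} \<and>
      (\<forall>a \<in> {1..h+p}. a \<le> \<sigma> a + h \<and> \<sigma> a \<le> a + p)}"

definition FL :: "nat \<Rightarrow> nat \<Rightarrow> (nat \<Rightarrow> nat) \<Rightarrow> (nat \<Rightarrow> nat)" where
  "FL h p \<sigma> = (\<lambda>a. if a \<in> {1..h} then (if p < \<sigma> a then \<sigma> a - p else 0) else undefined)"

definition FH :: "nat \<Rightarrow> nat \<Rightarrow> (nat \<Rightarrow> nat) \<Rightarrow> (nat \<Rightarrow> nat)" where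
  "FH h p \<sigma> = (\<lambda>b. if b \<in> {1..p} then (if \<sigma> (h + p + 1 - b) \<le> p then p + 1 - \<sigma> (h + p + 1 - b) else 0) else undefined)"

definition tau :: "nat \<Rightarrow> nat \<Rightarrow> (nat \<Rightarrow> nat) \<Rightarrow> nat" where
  "tau h p \<sigma> = card {a \<in> {1..h}. \<sigma> a \<le> p}"

lemma finite_Perm[simp]: "finite (Perm h p)"
proof -
  have "Perm h p \<subseteq> {1..h+p} \<rightarrow>\<^sub>E {1..h+p}" by (auto simp: Perm_def)
  then show ?thesis by (rule finite_subset) (simp add: finite_PiE)
qed

lemma Perm_surj:
  assumes "\<sigma> \<in> Perm h p"
  shows "\<sigma> ` {1..h+p} = {1..h+p}"
proof -
  have inj: "inj_on \<sigma> {1..h+p}" and sub: "\<sigma> ` {1..h+p} \<subseteq> {1..h+p}" using assms by (auto simp: Perm_def PiE_def Pi_def)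
  have "card (\<sigma> ` {1..h+p}) = card {1..h+p}" using inj by (rule card_image)
  then show ?thesis using sub by (simp add: card_subset_eq)
qed

lemma Perm_preimage_card:
  assumes "\<sigma> \<in> Perm h p"
  shows "card {a \<in> {1..h+p}. \<sigma> a \<in> T} = card (T \<inter> {1..h+p})"
proof -
  have inj: "inj_on \<sigma> {1..h+p}" using assms by (auto simp: Perm_def)
  have "\<sigma> ` {a \<in> {1..h+p}. \<sigma> a \<in> T} = T \<inter> {1..h+p}"
  proof
    show "\<sigma> ` {a \<in> {1..h+p}. \<sigma> a \<in> T} \<subseteq> T \<inter> {1..h+p}" using Perm_surj[OF assms] by auto
    show "T \<inter> {1..h+p} \<subseteq> \<sigma> ` {a \<in> {1..h+p}. \<sigma> a \<in> T}"
    proof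
      fix x assume x: "x \<in> T \<inter> {1..h+p}"
      then have "x \<in> \<sigma> ` {1..h+p}" using Perm_surj[OF assms] by simp
      then obtain a where "a \<in> {1..h+p}" "x = \<sigma> a" by auto
      then show "x \<in> \<sigma> ` {a \<in> {1..h+p}. \<sigma> a \<in> T}" using x by auto
    qed
  qed
  moreover have "inj_on \<sigma> {a \<in> {1..h+p}. \<sigma> a \<in> T}" using inj by (rule inj_on_subset) auto
  ultimately show ?thesis using card_image[of \<sigma> "{a \<in> {1..h+p}. \<sigma> a \<in> T}"] by simp
qed

lemma tau_le:
  assumes "\<sigma> \<in> Perm h p"
  shows "tau h p \<sigma> \<le> h" "tau h p \<sigma> \<le> p"
proof -
  show "tau h p \<sigma> \<le> h" unfolding tau_def by (rule order_trans[OF card_mono[of "{1..h}"]]) auto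
  have inj: "inj_on \<sigma> {a \<in> {1..h}. \<sigma> a \<le> p}" using assms by (rule_tac inj_on_subset[of _ "{1..h+p}"]) (auto simp: Perm_def)
  have "\<sigma> ` {a \<in> {1..h}. \<sigma> a \<le> p} \<subseteq> {1..p}" using assms by (auto simp: Perm_def PiE_def Pi_def)
  then have "card (\<sigma> ` {a \<in> {1..h}. \<sigma> a \<le> p}) \<le> card {1..p}" by (intro card_mono) auto
  then have "card (\<sigma> ` {a \<in> {1..h}. \<sigma> a \<le> p}) \<le> p" by simp
  then show "tau h p \<sigma> \<le> p" using inj by (simp add: tau_def card_image)
qed

lemma FL_Rk:
  assumes "\<sigma> \<in> Perm h p"
  shows "FL h p \<sigma> \<in> Rk h (h - tau h p \<sigma>)"
proof -
  have pie: "\<sigma> \<in> {1..h+p} \<rightarrow>\<^sub>E {1..h+p}" and inj: "inj_on \<sigma> {1..h+p}"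
    and con: "\<forall>a \<in> {1..h+p}. a \<le> \<sigma> a + h \<and> \<sigma> a \<le> a + p" using assms by (auto simp: Perm_def)
  have v: "\<forall>a \<in> {1..h}. \<sigma> a \<le> h + p" using pie by (auto simp: PiE_def Pi_def)
  have v': "\<forall>a \<in> {1..h}. \<sigma> a - p \<le> h"
  proof
    fix a assume "a \<in> {1..h}" then have "\<sigma> a \<le> h + p" using v by blast
    then show "\<sigma> a - p \<le> h" by linarith
  qed
  have c1: "FL h p \<sigma> \<in> {1..h} \<rightarrow>\<^sub>E {0..h}" using v' by (auto simp: FL_def PiE_def Pi_def extensional_def)
  have c2: "\<forall>a \<in> {1..h}. FL h p \<sigma> a \<le> a"
  proof
    fix a assume a: "a \<in> {1..h}"
    then have "a \<in> {1..h+p}" by auto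
    then have "\<sigma> a \<le> a + p" using con by blast
    then show "FL h p \<sigma> a \<le> a" using a by (simp add: FL_def) arith
  qed
  have nzeq: "nz h (FL h p \<sigma>) = {a \<in> {1..h}. p < \<sigma> a}" by (auto simp: nz_def FL_def)
  have c3: "inj_on (FL h p \<sigma>) (nz h (FL h p \<sigma>))"
  proof (rule inj_onI)
    fix x y assume xy: "x \<in> nz h (FL h p \<sigma>)" "y \<in> nz h (FL h p \<sigma>)" "FL h p \<sigma> x = FL h p \<sigma> y"
    then have "\<sigma> x = \<sigma> y" using nzeq by (auto simp: FL_def)
    then show "x = y" using inj xy nzeq by (auto dest: inj_onD)
  qed
  have c4: "card (nz h (FL h p \<sigma>)) = h - tau h p \<sigma>"
  proof -
    have sp: "{1..h} = {a \<in> {1..h}. \<sigma> a \<le> p} \<union> {a \<in> {1..h}. p < \<sigma> a}" by auto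
    have "card {1..h} = card ({a \<in> {1..h}. \<sigma> a \<le> p} \<union> {a \<in> {1..h}. p < \<sigma> a})"
      by (rule arg_cong[where f=card, OF sp])
    also have "\<dots> = card {a \<in> {1..h}. \<sigma> a \<le> p} + card {a \<in> {1..h}. p < \<sigma> a}"
      by (rule card_Un_disjoint) auto
    finally have "card {1..h} = card {a \<in> {1..h}. \<sigma> a \<le> p} + card {a \<in> {1..h}. p < \<sigma> a}" .
    then show ?thesis using nzeq by (simp add: tau_def)
  qed
  show ?thesis using c1 c2 c3 c4 by (simp add: Rk_def)
qed

lemma FH_Rk:
  assumes "\<sigma> \<in> Perm h p"
  shows "FH h p \<sigma> \<in> Rk p (p - tau h p \<sigma>)"
proof -
  have pie: "\<sigma> \<in> {1..h+p} \<rightarrow>\<^sub>E {1..h+p}" and inj: "inj_on \<sigma> {1..h+p}"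
    and con: "\<forall>a \<in> {1..h+p}. a \<le> \<sigma> a + h \<and> \<sigma> a \<le> a + p" using assms by (auto simp: Perm_def)
  have v: "\<forall>a \<in> {1..h+p}. 1 \<le> \<sigma> a" using pie by (auto simp: PiE_def Pi_def)
  have v1: "\<forall>b \<in> {1..p}. 1 \<le> \<sigma> (h + p + 1 - b)"
  proof
    fix b assume "b \<in> {1..p}"
    then have "h + p + 1 - b \<in> {1..h+p}" by auto
    then show "1 \<le> \<sigma> (h + p + 1 - b)" using v by blast
  qed
  have c1: "FH h p \<sigma> \<in> {1..p} \<rightarrow>\<^sub>E {0..p}"
  proof -
    have "\<forall>b \<in> {1..p}. FH h p \<sigma> b \<in> {0..p}"
    proof
      fix b assume b: "b \<in> {1..p}"
      then have "1 \<le> \<sigma> (h + p + 1 - b)" using v1 by blast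
      then show "FH h p \<sigma> b \<in> {0..p}" using b by (auto simp: FH_def)
    qed
    then show ?thesis by (auto simp: FH_def PiE_def Pi_def extensional_def)
  qed
  have c2: "\<forall>b \<in> {1..p}. FH h p \<sigma> b \<le> b"
  proof
    fix b assume b: "b \<in> {1..p}"
    then have "h + p + 1 - b \<in> {1..h+p}" by auto
    then have "h + p + 1 - b \<le> \<sigma> (h + p + 1 - b) + h" using con by blast
    then show "FH h p \<sigma> b \<le> b" using b by (auto simp: FH_def)
  qed
  have nzeq: "nz p (FH h p \<sigma>) = {b \<in> {1..p}. \<sigma> (h + p + 1 - b) \<le> p}"
    using v1 by (auto simp: nz_def FH_def)
  have c3: "inj_on (FH h p \<sigma>) (nz p (FH h p \<sigma>))"
  proof (rule inj_onI)
    fix x y assume xy: "x \<in> nz p (FH h p \<sigma>)" "y \<in> nz p (FH h p \<sigma>)" "FH h p \<sigma> x = FH h p \<sigma> y"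
    have xr: "x \<in> {1..p}" "\<sigma> (h + p + 1 - x) \<le> p" and yr: "y \<in> {1..p}" "\<sigma> (h + p + 1 - y) \<le> p"
      using xy(1,2) nzeq by auto
    then have "\<sigma> (h + p + 1 - x) = \<sigma> (h + p + 1 - y)" using xy(3) by (auto simp: FH_def)
    moreover have "h + p + 1 - x \<in> {1..h+p}" "h + p + 1 - y \<in> {1..h+p}" using xr yr by auto
    ultimately have "h + p + 1 - x = h + p + 1 - y" using inj by (auto dest: inj_onD)
    then show "x = y" using xr yr by auto
  qed
  have c4: "card (nz p (FH h p \<sigma>)) = p - tau h p \<sigma>"
  proof -
    have A: "card {a \<in> {1..h+p}. \<sigma> a \<in> {1..p}} = p" using Perm_preimage_card[OF assms, of "{1..p}"]
      by (simp add: Int_absorb2)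
    have sp: "{a \<in> {1..h+p}. \<sigma> a \<in> {1..p}} = {a \<in> {1..h}. \<sigma> a \<le> p} \<union> {a \<in> {h+1..h+p}. \<sigma> a \<le> p}"
      using v by auto
    have "card {a \<in> {1..h+p}. \<sigma> a \<in> {1..p}} = card {a \<in> {1..h}. \<sigma> a \<le> p} + card {a \<in> {h+1..h+p}. \<sigma> a \<le> p}"
      unfolding sp by (rule card_Un_disjoint) auto
    then have B: "card {a \<in> {h+1..h+p}. \<sigma> a \<le> p} = p - tau h p \<sigma>" using A by (simp add: tau_def)
    have "bij_betw (\<lambda>b. h + p + 1 - b) {b \<in> {1..p}. \<sigma> (h + p + 1 - b) \<le> p} {a \<in> {h+1..h+p}. \<sigma> a \<le> p}"
      by (rule bij_betw_byWitness[where f'="\<lambda>a. h + p + 1 - a"]) auto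
    then have "card {b \<in> {1..p}. \<sigma> (h + p + 1 - b) \<le> p} = card {a \<in> {h+1..h+p}. \<sigma> a \<le> p}"
      by (rule bij_betw_same_card)
    then show ?thesis using B nzeq by simp
  qed
  show ?thesis using c1 c2 c3 c4 by (simp add: Rk_def)
qed

lemma inj_union:
  assumes "inj_on F A" "inj_on F B" "F ` A \<subseteq> X" "F ` B \<subseteq> Y" "X \<inter> Y = {}"
  shows "inj_on F (A \<union> B)"
proof (rule inj_onI)
  fix x y assume xy: "x \<in> A \<union> B" "y \<in> A \<union> B" "F x = F y"
  show "x = y"
  proof (cases "x \<in> A")
    case xA: True
    show ?thesis
    proof (cases "y \<in> A")
      case True then show ?thesis using xA xy(3) assms(1) by (auto dest: inj_onD)
    next
      case False then have "y \<in> B" using xy by auto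
      then have "F y \<in> Y" "F x \<in> X" using assms(3,4) xA by auto
      then show ?thesis using xy(3) assms(5) by auto
    qed
  next
    case xB: False
    then have xB': "x \<in> B" using xy by auto
    show ?thesis
    proof (cases "y \<in> A")
      case True
      then have "F y \<in> X" "F x \<in> Y" using assms(3,4) xB' by auto
      then show ?thesis using xy(3) assms(5) by auto
    next
      case False then have "y \<in> B" using xy by auto
      then show ?thesis using xB' xy(3) assms(2) by (auto dest: inj_onD)
    qed
  qed
qed

lemma prod_minus_fact: "prod ((-) t) {0..<t} = fact (t::nat)"
  using fact_prod_rev[of t, where 'a=nat] by simp

lemma card_inj_same:
  assumes "finite A" "finite C" "card A = t" "card C = t"
  shows "card {\<alpha> \<in> A \<rightarrow>\<^sub>E C. inj_on \<alpha> A} = fact t"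
  using card_inj_on_subset_funcset[OF assms(1) assms(2) subset_refl] assms(3,4) prod_minus_fact by simp

lemma disj_ivl: "A \<subseteq> {a..b::nat} \<Longrightarrow> B \<subseteq> {c..d} \<Longrightarrow> b < c \<Longrightarrow> A \<inter> B = {}"
proof -
  assume "A \<subseteq> {a..b}" "B \<subseteq> {c..d}" "b < c"
  then have "A \<inter> B \<subseteq> {a..b} \<inter> {c..d}" by blast
  moreover have "{a..b} \<inter> {c..d} = {}" using \<open>b < c\<close> by auto
  ultimately show ?thesis by blast
qed

lemma fiber_card:
  assumes fR: "f \<in> Rk h (h - t)" and gR: "g \<in> Rk p (p - t)" and th: "t \<le> h" and tp: "t \<le> p"
  shows "card {\<sigma> \<in> Perm h p. FL h p \<sigma> = f \<and> FH h p \<sigma> = g} = fact t * fact t"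
proof -
  have fpi: "f \<in> {1..h} \<rightarrow>\<^sub>E {0..h}" and fle: "\<forall>a \<in> {1..h}. f a \<le> a" and finj: "inj_on f (nz h f)"
    and fcard: "card (nz h f) = h - t" using fR by (auto simp: Rk_def)
  have gpi: "g \<in> {1..p} \<rightarrow>\<^sub>E {0..p}" and gle: "\<forall>b \<in> {1..p}. g b \<le> b" and ginj: "inj_on g (nz p g)"
    and gcard: "card (nz p g) = p - t" using gR by (auto simp: Rk_def)
  define Lo where "Lo = {a \<in> {1..h}. f a = 0}"
  define P1 where "P1 = (\<lambda>b. p + 1 - g b) ` nz p g"
  define S1 where "S1 = {1..p} - P1"
  define Hi where "Hi = (\<lambda>b. h + p + 1 - b) ` {b \<in> {1..p}. g b = 0}"
  define P2 where "P2 = (\<lambda>a. p + f a) ` nz h f"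
  define S2 where "S2 = {p+1..h+p} - P2"
  define I1 where "I1 = {\<alpha> \<in> Lo \<rightarrow>\<^sub>E S1. inj_on \<alpha> Lo}"
  define I2 where "I2 = {\<beta> \<in> Hi \<rightarrow>\<^sub>E S2. inj_on \<beta> Hi}"
  define mk where "mk = (\<lambda>(\<alpha>::nat \<Rightarrow> nat, \<beta>::nat \<Rightarrow> nat). (\<lambda>a. if a \<in> {1..h} then (if f a \<noteq> 0 then p + f a else \<alpha> a)
      else if a \<in> {h+1..h+p} then (if g (h + p + 1 - a) \<noteq> 0 then p + 1 - g (h + p + 1 - a) else \<beta> a)
      else undefined))"
  define F where "F = {\<sigma> \<in> Perm h p. FL h p \<sigma> = f \<and> FH h p \<sigma> = g}"
  have nzf: "\<And>a. a \<in> nz h f \<longleftrightarrow> a \<in> {1..h} \<and> f a \<noteq> 0" by (simp add: nz_def)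
  have nzg: "\<And>b. b \<in> nz p g \<longleftrightarrow> b \<in> {1..p} \<and> g b \<noteq> 0" by (simp add: nz_def)
  have Hi_char: "\<And>a. a \<in> Hi \<longleftrightarrow> a \<in> {h+1..h+p} \<and> g (h + p + 1 - a) = 0"
  proof -
    fix a
    show "a \<in> Hi \<longleftrightarrow> a \<in> {h+1..h+p} \<and> g (h + p + 1 - a) = 0"
    proof
      assume "a \<in> Hi"
      then obtain b where "b \<in> {1..p}" "g b = 0" "a = h + p + 1 - b" by (auto simp: Hi_def)
      then show "a \<in> {h+1..h+p} \<and> g (h + p + 1 - a) = 0" by auto
    next
      assume a: "a \<in> {h+1..h+p} \<and> g (h + p + 1 - a) = 0"
      then have "h + p + 1 - a \<in> {b \<in> {1..p}. g b = 0}" "a = h + p + 1 - (h + p + 1 - a)" by auto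
      then show "a \<in> Hi" unfolding Hi_def by blast
    qed
  qed
  have Lo_char: "\<And>a. a \<in> Lo \<longleftrightarrow> a \<in> {1..h} \<and> f a = 0" by (simp add: Lo_def)
  have gval: "\<And>b. b \<in> nz p g \<Longrightarrow> 1 \<le> g b \<and> g b \<le> p"
  proof -
    fix b assume "b \<in> nz p g"
    then have "b \<in> {1..p}" "g b \<noteq> 0" by (auto simp: nz_def)
    moreover have "g b \<le> b" using gle \<open>b \<in> {1..p}\<close> by blast
    ultimately show "1 \<le> g b \<and> g b \<le> p" by auto
  qed
  have fval: "\<And>a. a \<in> nz h f \<Longrightarrow> 1 \<le> f a \<and> f a \<le> h \<and> f a \<le> a"
  proof -
    fix a assume "a \<in> nz h f"
    then have "a \<in> {1..h}" "f a \<noteq> 0" by (auto simp: nz_def)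
    moreover have "f a \<le> a" using fle \<open>a \<in> {1..h}\<close> by blast
    ultimately show "1 \<le> f a \<and> f a \<le> h \<and> f a \<le> a" by auto
  qed
  have P1sub: "P1 \<subseteq> {1..p}" using gval by (force simp: P1_def)
  have P2sub: "P2 \<subseteq> {p+1..h+p}" using fval by (force simp: P2_def)
  have finP: "finite P1" "finite P2" by (auto simp: P1_def P2_def)
  have cLo: "card Lo = t"
  proof -
    have "{1..h} = Lo \<union> nz h f" "Lo \<inter> nz h f = {}" by (auto simp: Lo_def nz_def)
    then have "card {1..h} = card Lo + card (nz h f)" by (metis card_Un_disjoint finite_Un finite_atLeastAtMost)
    then show ?thesis using fcard th by simp
  qed
  have cP1: "card P1 = p - t"
  proof -
    have "inj_on (\<lambda>b. p + 1 - g b) (nz p g)"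
    proof (rule inj_onI)
      fix x y assume "x \<in> nz p g" "y \<in> nz p g" "p + 1 - g x = p + 1 - g y"
      then have "g x = g y" using gval[of x] gval[of y] by arith
      then show "x = y" using ginj \<open>x \<in> nz p g\<close> \<open>y \<in> nz p g\<close> by (auto dest: inj_onD)
    qed
    then show ?thesis using gcard by (simp add: P1_def card_image)
  qed
  have cS1: "card S1 = t" using cP1 P1sub tp finP by (simp add: S1_def card_Diff_subset)
  have cP2: "card P2 = h - t"
  proof -
    have "inj_on (\<lambda>a. p + f a) (nz h f)"
    proof (rule inj_onI)
      fix x y assume "x \<in> nz h f" "y \<in> nz h f" "p + f x = p + f y"
      then show "x = y" using finj by (auto dest: inj_onD)
    qed
    then show ?thesis using fcard by (simp add: P2_def card_image)
  qed
  have cS2: "card S2 = t" using cP2 P2sub th finP by (simp add: S2_def card_Diff_subset)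
  have cHi: "card Hi = t"
  proof -
    have "inj_on (\<lambda>b. h + p + 1 - b) {b \<in> {1..p}. g b = 0}" by (rule inj_onI) auto
    then have "card Hi = card {b \<in> {1..p}. g b = 0}" by (simp add: Hi_def card_image)
    moreover have "{1..p} = {b \<in> {1..p}. g b = 0} \<union> nz p g" "{b \<in> {1..p}. g b = 0} \<inter> nz p g = {}"
      by (auto simp: nz_def)
    ultimately show ?thesis using gcard tp by (metis card_Un_disjoint finite_Un finite_atLeastAtMost card_atLeastAtMost
        diff_Suc_1 diff_diff_cancel add_diff_cancel_right')
  qed
  have finLo: "finite Lo" "finite Hi" "finite S1" "finite S2" by (auto simp: Lo_def Hi_def S1_def S2_def)
  have cI1: "card I1 = fact t" unfolding I1_def using card_inj_same[OF finLo(1) finLo(3) cLo cS1] .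
  have cI2: "card I2 = fact t" unfolding I2_def using card_inj_same[OF finLo(2) finLo(4) cHi cS2] .
  have bij: "bij_betw (\<lambda>\<sigma>. (restrict \<sigma> Lo, restrict \<sigma> Hi)) F (I1 \<times> I2)"
  proof (rule bij_betw_byWitness[where f'=mk])
    show "\<forall>\<sigma>\<in>F. mk (restrict \<sigma> Lo, restrict \<sigma> Hi) = \<sigma>"
    proof
      fix \<sigma> assume \<sigma>F: "\<sigma> \<in> F"
      have sP: "\<sigma> \<in> Perm h p" and fl: "FL h p \<sigma> = f" and fh: "FH h p \<sigma> = g" using \<sigma>F by (auto simp: F_def)
      have pie: "\<sigma> \<in> {1..h+p} \<rightarrow>\<^sub>E {1..h+p}" using sP by (simp add: Perm_def)
      show "mk (restrict \<sigma> Lo, restrict \<sigma> Hi) = \<sigma>"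
      proof (rule ext)
        fix a
        consider (A) "a \<in> {1..h}" "f a \<noteq> 0" | (B) "a \<in> {1..h}" "f a = 0"
          | (C) "a \<in> {h+1..h+p}" "g (h + p + 1 - a) \<noteq> 0" | (D) "a \<in> {h+1..h+p}" "g (h + p + 1 - a) = 0"
          | (E) "a \<notin> {1..h+p}" by fastforce
        then show "mk (restrict \<sigma> Lo, restrict \<sigma> Hi) a = \<sigma> a"
        proof cases
          case A
          have "FL h p \<sigma> a = f a" using fl by simp
          then have "p < \<sigma> a \<and> \<sigma> a - p = f a" using A by (simp add: FL_def split: if_splits)
          then have "p + f a = \<sigma> a" by arith
          then show ?thesis using A by (simp add: mk_def)
        next
          case B
          then have "a \<in> Lo" by (simp add: Lo_def)
          then show ?thesis using B by (simp add: mk_def)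
        next
          case C
          define b where "b = h + p + 1 - a"
          have b: "b \<in> {1..p}" "h + p + 1 - b = a" using C by (auto simp: b_def)
          have "FH h p \<sigma> b = g b" using fh by simp
          then have e: "\<sigma> a \<le> p \<and> p + 1 - \<sigma> a = g b" using b C by (simp add: FH_def b_def split: if_splits)
          have "1 \<le> \<sigma> a" using pie C by (auto simp: PiE_def Pi_def)
          then have "p + 1 - g b = \<sigma> a" using e by arith
          moreover have "a \<notin> {1..h}" using C by auto
          ultimately show ?thesis using C by (simp add: mk_def b_def)
        next
          case D
          then have "a \<in> Hi" using Hi_char by simp
          moreover have "a \<notin> {1..h}" using D by auto
          ultimately show ?thesis using D by (simp add: mk_def)
        next
          case E
          then have "\<sigma> a = undefined" using pie by (auto simp: PiE_def extensional_def)
          moreover have "a \<notin> {1..h}" "a \<notin> {h+1..h+p}" using E by auto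
          ultimately show ?thesis by (simp add: mk_def del: atLeastAtMost_iff)
        qed
      qed
    qed
    show "\<forall>x\<in>I1 \<times> I2. (restrict (mk x) Lo, restrict (mk x) Hi) = x"
    proof
      fix x assume x: "x \<in> I1 \<times> I2"
      obtain \<alpha> \<beta> where xd: "x = (\<alpha>, \<beta>)" and \<alpha>: "\<alpha> \<in> I1" and \<beta>: "\<beta> \<in> I2" using x by auto
      have ea: "\<alpha> \<in> extensional Lo" using \<alpha> by (simp add: I1_def PiE_def)
      have eb: "\<beta> \<in> extensional Hi" using \<beta> by (simp add: I2_def PiE_def)
      have r1: "restrict (mk (\<alpha>, \<beta>)) Lo = \<alpha>"
      proof (rule ext)
        fix a show "restrict (mk (\<alpha>, \<beta>)) Lo a = \<alpha> a"
        proof (cases "a \<in> Lo")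
          case True then show ?thesis by (simp add: mk_def Lo_def)
        next
          case False then show ?thesis using ea by (simp add: extensional_def)
        qed
      qed
      have r2: "restrict (mk (\<alpha>, \<beta>)) Hi = \<beta>"
      proof (rule ext)
        fix a show "restrict (mk (\<alpha>, \<beta>)) Hi a = \<beta> a"
        proof (cases "a \<in> Hi")
          case True
          then have "a \<in> {h+1..h+p}" "g (h + p + 1 - a) = 0" using Hi_char by auto
          moreover have "a \<notin> {1..h}" using calculation by auto
          ultimately show ?thesis using True by (simp add: mk_def)
        next
          case False then show ?thesis using eb by (simp add: extensional_def)
        qed
      qed
      show "(restrict (mk x) Lo, restrict (mk x) Hi) = x" using r1 r2 xd by simp
    qed
    show "(\<lambda>\<sigma>. (restrict \<sigma> Lo, restrict \<sigma> Hi)) ` F \<subseteq> I1 \<times> I2"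
    proof
      fix x assume "x \<in> (\<lambda>\<sigma>. (restrict \<sigma> Lo, restrict \<sigma> Hi)) ` F"
      then obtain \<sigma> where \<sigma>F: "\<sigma> \<in> F" and x: "x = (restrict \<sigma> Lo, restrict \<sigma> Hi)" by auto
      have sP: "\<sigma> \<in> Perm h p" and fl: "FL h p \<sigma> = f" and fh: "FH h p \<sigma> = g" using \<sigma>F by (auto simp: F_def)
      have pie: "\<sigma> \<in> {1..h+p} \<rightarrow>\<^sub>E {1..h+p}" and inj: "inj_on \<sigma> {1..h+p}" using sP by (auto simp: Perm_def)
      have sv: "\<And>a. a \<in> {1..h+p} \<Longrightarrow> 1 \<le> \<sigma> a \<and> \<sigma> a \<le> h + p" using pie by (auto simp: PiE_def Pi_def)
      have a1: "\<forall>a \<in> Lo. \<sigma> a \<in> S1"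
      proof
        fix a assume a: "a \<in> Lo"
        then have aH: "a \<in> {1..h}" "f a = 0" by (auto simp: Lo_def)
        have "FL h p \<sigma> a = 0" using fl aH by simp
        then have le: "\<sigma> a \<le> p" using aH by (simp add: FL_def split: if_splits)
        have ge: "1 \<le> \<sigma> a" using sv aH by auto
        have notP1: "\<sigma> a \<notin> P1"
        proof
          assume "\<sigma> a \<in> P1"
          then obtain b where b: "b \<in> nz p g" "\<sigma> a = p + 1 - g b" by (auto simp: P1_def)
          have bp: "b \<in> {1..p}" "g b \<noteq> 0" using b by (auto simp: nz_def)
          have "FH h p \<sigma> b = g b" using fh by simp
          then have e: "\<sigma> (h + p + 1 - b) \<le> p \<and> p + 1 - \<sigma> (h + p + 1 - b) = g b"
            using bp by (simp add: FH_def split: if_splits)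
          have "h + p + 1 - b \<in> {1..h+p}" using bp by auto
          then have "1 \<le> \<sigma> (h + p + 1 - b)" using sv by blast
          then have "\<sigma> (h + p + 1 - b) = p + 1 - g b" using e by arith
          then have "\<sigma> (h + p + 1 - b) = \<sigma> a" using b by simp
          moreover have "h + p + 1 - b \<in> {1..h+p}" "a \<in> {1..h+p}" using bp aH by auto
          ultimately have "h + p + 1 - b = a" using inj by (auto dest: inj_onD)
          then show False using aH bp by auto
        qed
        show "\<sigma> a \<in> S1" using le ge notP1 by (simp add: S1_def)
      qed
      have a2: "\<forall>a \<in> Hi. \<sigma> a \<in> S2"
      proof
        fix a assume a: "a \<in> Hi"
        then have aH: "a \<in> {h+1..h+p}" "g (h + p + 1 - a) = 0" using Hi_char by auto
        define b where "b = h + p + 1 - a"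
        have b: "b \<in> {1..p}" "h + p + 1 - b = a" "g b = 0" using aH by (auto simp: b_def)
        have "FH h p \<sigma> b = 0" using fh b by simp
        moreover have "1 \<le> \<sigma> a" "\<sigma> a \<le> h + p" using sv aH by auto
        ultimately have gt: "p < \<sigma> a" using b by (auto simp: FH_def split: if_splits)
        have notP2: "\<sigma> a \<notin> P2"
        proof
          assume "\<sigma> a \<in> P2"
          then obtain a' where a': "a' \<in> nz h f" "\<sigma> a = p + f a'" by (auto simp: P2_def)
          have ap: "a' \<in> {1..h}" "f a' \<noteq> 0" using a' by (auto simp: nz_def)
          have "FL h p \<sigma> a' = f a'" using fl by simp
          then have "p < \<sigma> a' \<and> \<sigma> a' - p = f a'" using ap by (simp add: FL_def split: if_splits)
          then have "\<sigma> a' = \<sigma> a" using a' by arith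
          moreover have "a' \<in> {1..h+p}" "a \<in> {1..h+p}" using ap aH by auto
          ultimately have "a' = a" using inj by (auto dest: inj_onD)
          then show False using ap aH by simp
        qed
        show "\<sigma> a \<in> S2" using gt \<open>\<sigma> a \<le> h + p\<close> notP2 by (simp add: S2_def)
      qed
      have LoS: "Lo \<subseteq> {1..h+p}" "Hi \<subseteq> {1..h+p}" using Hi_char by (auto simp: Lo_def)
      have r1: "restrict \<sigma> Lo \<in> I1"
      proof -
        have "inj_on \<sigma> Lo" using inj LoS(1) by (rule inj_on_subset)
        then have "inj_on (restrict \<sigma> Lo) Lo" by (simp add: inj_on_def)
        then show ?thesis using a1 by (simp add: I1_def)
      qed
      have r2: "restrict \<sigma> Hi \<in> I2"
      proof -
        have "inj_on \<sigma> Hi" using inj LoS(2) by (rule inj_on_subset)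
        then have "inj_on (restrict \<sigma> Hi) Hi" by (simp add: inj_on_def)
        then show ?thesis using a2 by (simp add: I2_def)
      qed
      show "x \<in> I1 \<times> I2" using r1 r2 x by simp
    qed
    show "mk ` (I1 \<times> I2) \<subseteq> F"
    proof
      fix M assume "M \<in> mk ` (I1 \<times> I2)"
      then obtain \<alpha> \<beta> where \<alpha>: "\<alpha> \<in> I1" and \<beta>: "\<beta> \<in> I2" and M: "M = mk (\<alpha>, \<beta>)" by auto
      have \<alpha>pi: "\<alpha> \<in> Lo \<rightarrow>\<^sub>E S1" and \<alpha>inj: "inj_on \<alpha> Lo" using \<alpha> by (auto simp: I1_def)
      have \<beta>pi: "\<beta> \<in> Hi \<rightarrow>\<^sub>E S2" and \<beta>inj: "inj_on \<beta> Hi" using \<beta> by (auto simp: I2_def)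
      define D3 where "D3 = {a \<in> {h+1..h+p}. g (h + p + 1 - a) \<noteq> 0}"
      have M1: "\<And>a. a \<in> nz h f \<Longrightarrow> M a = p + f a" by (auto simp: M mk_def nz_def)
      have M2: "\<And>a. a \<in> Lo \<Longrightarrow> M a = \<alpha> a" by (auto simp: M mk_def Lo_def)
      have M3: "\<And>a. a \<in> D3 \<Longrightarrow> M a = p + 1 - g (h + p + 1 - a)"
      proof -
        fix a assume a: "a \<in> D3"
        then have "a \<notin> {1..h}" "a \<in> {h+1..h+p}" "g (h + p + 1 - a) \<noteq> 0" by (auto simp: D3_def)
        then show "M a = p + 1 - g (h + p + 1 - a)" by (simp add: M mk_def del: atLeastAtMost_iff)
      qed
      have M4: "\<And>a. a \<in> Hi \<Longrightarrow> M a = \<beta> a"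
      proof -
        fix a assume a: "a \<in> Hi"
        then have "a \<notin> {1..h}" "a \<in> {h+1..h+p}" "g (h + p + 1 - a) = 0" using Hi_char by auto
        then show "M a = \<beta> a" by (simp add: M mk_def del: atLeastAtMost_iff)
      qed
      have M5: "\<And>a. a \<notin> {1..h+p} \<Longrightarrow> M a = undefined"
      proof -
        fix a assume a: "a \<notin> {1..h+p}"
        then have "a \<notin> {1..h}" "a \<notin> {h+1..h+p}" by auto
        then show "M a = undefined" by (simp add: M mk_def del: atLeastAtMost_iff)
      qed
      have D3b: "\<And>a. a \<in> D3 \<Longrightarrow> h + p + 1 - a \<in> nz p g \<and> h + p + 1 - (h + p + 1 - a) = a"
        by (auto simp: D3_def nz_def)
      have cover: "{1..h+p} = nz h f \<union> Lo \<union> D3 \<union> Hi"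
      proof
        show "{1..h+p} \<subseteq> nz h f \<union> Lo \<union> D3 \<union> Hi"
        proof
          fix a assume a: "a \<in> {1..h+p}"
          show "a \<in> nz h f \<union> Lo \<union> D3 \<union> Hi"
          proof (cases "a \<le> h")
            case True then show ?thesis using a by (auto simp: nz_def Lo_def)
          next
            case False then show ?thesis using a Hi_char by (auto simp: D3_def)
          qed
        qed
        show "nz h f \<union> Lo \<union> D3 \<union> Hi \<subseteq> {1..h+p}" using Hi_char by (auto simp: nz_def Lo_def D3_def)
      qed
      have im1: "M ` nz h f \<subseteq> P2" using M1 by (auto simp: P2_def)
      have im2: "M ` Lo \<subseteq> S1" using M2 \<alpha>pi by (auto simp: PiE_def Pi_def)
      have im3: "M ` D3 \<subseteq> P1"
      proof
        fix y assume "y \<in> M ` D3"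
        then obtain a where a: "a \<in> D3" "y = M a" by auto
        then show "y \<in> P1" using M3 D3b[OF a(1)] unfolding P1_def by (metis image_eqI)
      qed
      have im4: "M ` Hi \<subseteq> S2" using M4 \<beta>pi by (auto simp: PiE_def Pi_def)
      have S1sub: "S1 \<subseteq> {1..p}" and S2sub: "S2 \<subseteq> {p+1..h+p}" by (auto simp: S1_def S2_def)
      have inj1: "inj_on M (nz h f)"
      proof (rule inj_onI)
        fix x y assume "x \<in> nz h f" "y \<in> nz h f" "M x = M y"
        then show "x = y" using M1 finj by (auto dest: inj_onD)
      qed
      have inj2: "inj_on M Lo" using \<alpha>inj M2 by (metis inj_on_cong)
      have inj3: "inj_on M D3"
      proof (rule inj_onI)
        fix x y assume xy: "x \<in> D3" "y \<in> D3" "M x = M y"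
        have bx: "h + p + 1 - x \<in> nz p g" and by2: "h + p + 1 - y \<in> nz p g" using D3b xy by auto
        have "p + 1 - g (h + p + 1 - x) = p + 1 - g (h + p + 1 - y)" using xy M3 by simp
        then have "g (h + p + 1 - x) = g (h + p + 1 - y)" using gval[OF bx] gval[OF by2] by arith
        then have "h + p + 1 - x = h + p + 1 - y" using ginj bx by2 by (auto dest: inj_onD)
        then show "x = y" using xy by (auto simp: D3_def)
      qed
      have inj4: "inj_on M Hi" using \<beta>inj M4 by (metis inj_on_cong)
      have injM: "inj_on M {1..h+p}"
      proof -
        have d1: "P2 \<inter> S1 = {}" using disj_ivl[OF S1sub P2sub] by auto
        have j1: "inj_on M (nz h f \<union> Lo)" by (rule inj_union[OF inj1 inj2 im1 im2 d1])
        have im12: "M ` (nz h f \<union> Lo) \<subseteq> P2 \<union> S1" using im1 im2 by auto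
        have "P2 \<inter> P1 = {}" using disj_ivl[OF P1sub P2sub] by auto
        then have d2: "(P2 \<union> S1) \<inter> P1 = {}" by (auto simp: S1_def)
        have j2: "inj_on M (nz h f \<union> Lo \<union> D3)" by (rule inj_union[OF j1 inj3 im12 im3 d2])
        have im123: "M ` (nz h f \<union> Lo \<union> D3) \<subseteq> P2 \<union> S1 \<union> P1" using im12 im3 by auto
        have "S1 \<inter> S2 = {}" using disj_ivl[OF S1sub S2sub] by auto
        moreover have "P1 \<inter> S2 = {}" using disj_ivl[OF P1sub S2sub] by auto
        moreover have "P2 \<inter> S2 = {}" by (auto simp: S2_def)
        ultimately have d3: "(P2 \<union> S1 \<union> P1) \<inter> S2 = {}" by blast
        have "inj_on M (nz h f \<union> Lo \<union> D3 \<union> Hi)" by (rule inj_union[OF j2 inj4 im123 im4 d3])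
        then show ?thesis using cover by simp
      qed
      have Mpi: "M \<in> {1..h+p} \<rightarrow>\<^sub>E {1..h+p}"
      proof -
        have "M ` {1..h+p} \<subseteq> P2 \<union> S1 \<union> P1 \<union> S2" using cover im1 im2 im3 im4 by auto
        moreover have "P2 \<union> S1 \<union> P1 \<union> S2 \<subseteq> {1..h+p}" using P2sub S1sub P1sub S2sub by auto
        ultimately have "M ` {1..h+p} \<subseteq> {1..h+p}" by (rule subset_trans)
        then have "\<forall>a \<in> {1..h+p}. M a \<in> {1..h+p}" by (simp add: image_subset_iff del: atLeastAtMost_iff)
        then show ?thesis unfolding PiE_def Pi_def extensional_def using M5 by blast
      qed
      have con: "\<forall>a \<in> {1..h+p}. a \<le> M a + h \<and> M a \<le> a + p"
      proof
        fix a assume a: "a \<in> {1..h+p}"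
        have "{1..h+p} \<subseteq> nz h f \<union> Lo \<union> D3 \<union> Hi" using cover by (rule equalityD1)
        then have "a \<in> nz h f \<union> Lo \<union> D3 \<union> Hi" using a by (rule subsetD)
        then have "a \<in> nz h f \<or> a \<in> Lo \<or> a \<in> D3 \<or> a \<in> Hi" by blast
        then show "a \<le> M a + h \<and> M a \<le> a + p"
        proof (elim disjE)
          assume a1: "a \<in> nz h f"
          then show ?thesis using M1[OF a1] fval[OF a1] by (auto simp: nz_def)
        next
          assume a2: "a \<in> Lo"
          have "M a \<in> S1" using im2 a2 by auto
          then show ?thesis using S1sub a2 by (auto simp: Lo_def)
        next
          assume a3: "a \<in> D3"
          have b: "h + p + 1 - a \<in> nz p g" using D3b[OF a3] by simp
          have "g (h + p + 1 - a) \<le> h + p + 1 - a" using gle b by (auto simp: nz_def)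
          moreover have "1 \<le> g (h + p + 1 - a)" "g (h + p + 1 - a) \<le> p" using gval[OF b] by auto
          moreover have "a \<in> {h+1..h+p}" using a3 by (simp add: D3_def)
          ultimately show ?thesis using M3[OF a3] by auto
        next
          assume a4: "a \<in> Hi"
          have "M a \<in> S2" using im4 a4 by auto
          moreover have "a \<in> {h+1..h+p}" using a4 Hi_char by auto
          ultimately show ?thesis using S2sub by auto
        qed
      qed
      have MP: "M \<in> Perm h p" using Mpi injM con by (simp add: Perm_def)
      have MFL: "FL h p M = f"
      proof (rule ext)
        fix a
        show "FL h p M a = f a"
        proof (cases "a \<in> {1..h}")
          case True
          show ?thesis
          proof (cases "f a = 0")
            case False
            then have "a \<in> nz h f" using True by (simp add: nz_def)
            then show ?thesis using M1 True False by (simp add: FL_def)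
          next
            case z: True
            then have "a \<in> Lo" using True by (simp add: Lo_def)
            then have "M a \<in> S1" using im2 by auto
            then have "M a \<le> p" using S1sub by auto
            then show ?thesis using True z by (simp add: FL_def)
          qed
        next
          case False
          then have "f a = undefined" using fpi by (auto simp: PiE_def extensional_def)
          then show ?thesis using False by (simp add: FL_def del: atLeastAtMost_iff)
        qed
      qed
      have MFH: "FH h p M = g"
      proof (rule ext)
        fix b
        show "FH h p M b = g b"
        proof (cases "b \<in> {1..p}")
          case True
          define a where "a = h + p + 1 - b"
          have ab: "h + p + 1 - a = b" "a \<in> {h+1..h+p}" using True by (auto simp: a_def)
          show ?thesis
          proof (cases "g b = 0")
            case False
            then have a3: "a \<in> D3" using ab by (simp add: D3_def)
            have "M a = p + 1 - g b" using M3[OF a3] ab by simp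
            moreover have "1 \<le> g b" "g b \<le> p" using gval[of b] True False by (auto simp: nz_def)
            ultimately show ?thesis using True by (simp add: FH_def a_def)
          next
            case z: True
            then have "a \<in> Hi" using ab Hi_char by simp
            then have "M a \<in> S2" using im4 by auto
            then have "p < M a" using S2sub by auto
            then show ?thesis using True z by (simp add: FH_def a_def)
          qed
        next
          case False
          then have "g b = undefined" using gpi by (auto simp: PiE_def extensional_def)
          then show ?thesis using False by (simp add: FH_def del: atLeastAtMost_iff)
        qed
      qed
      show "M \<in> F" using MP MFL MFH by (simp add: F_def)
    qed
  qed
  have "card F = card (I1 \<times> I2)" using bij by (rule bij_betw_same_card)
  then show ?thesis using cI1 cI2 by (simp add: F_def card_cartesian_product)
qed

lemma card_tau_class:
  assumes th: "t \<le> h" and tp: "t \<le> p"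
  shows "card {\<sigma> \<in> Perm h p. tau h p \<sigma> = t} = card (Rk h (h - t)) * card (Rk p (p - t)) * (fact t * fact t)"
proof -
  define A where "A = (\<lambda>fg. {\<sigma> \<in> Perm h p. FL h p \<sigma> = fst fg \<and> FH h p \<sigma> = snd fg})"
  have eq: "{\<sigma> \<in> Perm h p. tau h p \<sigma> = t} = (\<Union>fg \<in> Rk h (h - t) \<times> Rk p (p - t). A fg)"
  proof
    show "{\<sigma> \<in> Perm h p. tau h p \<sigma> = t} \<subseteq> (\<Union>fg \<in> Rk h (h - t) \<times> Rk p (p - t). A fg)"
    proof
      fix \<sigma> assume \<sigma>: "\<sigma> \<in> {\<sigma> \<in> Perm h p. tau h p \<sigma> = t}"
      then have "(FL h p \<sigma>, FH h p \<sigma>) \<in> Rk h (h - t) \<times> Rk p (p - t)" using FL_Rk FH_Rk by auto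
      moreover have "\<sigma> \<in> A (FL h p \<sigma>, FH h p \<sigma>)" using \<sigma> by (simp add: A_def)
      ultimately show "\<sigma> \<in> (\<Union>fg \<in> Rk h (h - t) \<times> Rk p (p - t). A fg)" by blast
    qed
    show "(\<Union>fg \<in> Rk h (h - t) \<times> Rk p (p - t). A fg) \<subseteq> {\<sigma> \<in> Perm h p. tau h p \<sigma> = t}"
    proof
      fix \<sigma> assume "\<sigma> \<in> (\<Union>fg \<in> Rk h (h - t) \<times> Rk p (p - t). A fg)"
      then obtain f g where fg: "f \<in> Rk h (h - t)" "g \<in> Rk p (p - t)" and \<sigma>: "\<sigma> \<in> Perm h p" "FL h p \<sigma> = f"
        by (auto simp: A_def)
      have "FL h p \<sigma> \<in> Rk h (h - tau h p \<sigma>)" using FL_Rk[OF \<sigma>(1)] .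
      then have "card (nz h f) = h - tau h p \<sigma>" using \<sigma>(2) by (simp add: Rk_def)
      moreover have "card (nz h f) = h - t" using fg(1) by (simp add: Rk_def)
      moreover have "tau h p \<sigma> \<le> h" using tau_le[OF \<sigma>(1)] by simp
      ultimately have "tau h p \<sigma> = t" using th by simp
      then show "\<sigma> \<in> {\<sigma> \<in> Perm h p. tau h p \<sigma> = t}" using \<sigma> by simp
    qed
  qed
  have "card (\<Union>fg \<in> Rk h (h - t) \<times> Rk p (p - t). A fg) = (\<Sum>fg \<in> Rk h (h - t) \<times> Rk p (p - t). card (A fg))"
  proof (rule card_UN_disjoint)
    show "finite (Rk h (h - t) \<times> Rk p (p - t))" by simp
    show "\<forall>i\<in>Rk h (h - t) \<times> Rk p (p - t). finite (A i)" by (auto simp: A_def)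
    show "\<forall>i\<in>Rk h (h - t) \<times> Rk p (p - t). \<forall>j\<in>Rk h (h - t) \<times> Rk p (p - t). i \<noteq> j \<longrightarrow> A i \<inter> A j = {}"
      by (auto simp: A_def prod_eq_iff)
  qed
  also have "\<dots> = (\<Sum>fg \<in> Rk h (h - t) \<times> Rk p (p - t). fact t * fact t)"
  proof (rule sum.cong[OF refl])
    fix fg assume "fg \<in> Rk h (h - t) \<times> Rk p (p - t)"
    then show "card (A fg) = fact t * fact t" unfolding A_def
      using fiber_card[of "fst fg" h t "snd fg" p] th tp by (cases fg) auto
  qed
  also have "\<dots> = card (Rk h (h - t)) * card (Rk p (p - t)) * (fact t * fact t)"
    by (simp add: card_cartesian_product)
  finally show ?thesis using eq by simp
qed

lemma card_Perm:
  "card (Perm h p) = (\<Sum>t = 0..min h p. card (Rk h (h - t)) * card (Rk p (p - t)) * (fact t * fact t))"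
proof -
  have eq: "Perm h p = (\<Union>t \<in> {0..min h p}. {\<sigma> \<in> Perm h p. tau h p \<sigma> = t})"
    using tau_le by fastforce
  have "card (Perm h p) = (\<Sum>t \<in> {0..min h p}. card {\<sigma> \<in> Perm h p. tau h p \<sigma> = t})"
    by (subst eq, rule card_UN_disjoint) auto
  also have "\<dots> = (\<Sum>t = 0..min h p. card (Rk h (h - t)) * card (Rk p (p - t)) * (fact t * fact t))"
    by (rule sum.cong[OF refl]) (simp add: card_tau_class)
  finally show ?thesis .
qed

lemma card_Perm_polyB: "card (Perm h p) = polyB h p"
proof -
  have "card (Perm h p) = (\<Sum>t = 0..min h p. card (Rk h (h - t)) * card (Rk p (p - t)) * (fact t * fact t))"
    by (rule card_Perm)
  also have "\<dots> = (\<Sum>t = 0..min h p. (fact t)^2 * Stirling (h + 1) (t + 1) * Stirling (p + 1) (t + 1))"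
  proof (rule sum.cong[OF refl])
    fix t assume "t \<in> {0..min h p}"
    then have "t \<le> h" "t \<le> p" by auto
    then have "Suc h - (h - t) = t + 1" "Suc p - (p - t) = t + 1" by auto
    then show "card (Rk h (h - t)) * card (Rk p (p - t)) * (fact t * fact t) =
          (fact t)^2 * Stirling (h + 1) (t + 1) * Stirling (p + 1) (t + 1)"
      by (simp add: Rk_card power2_eq_square)
  qed
  also have "\<dots> = polyB h p" by (simp add: polyB_def)
  finally show ?thesis .
qed

definition site :: "nat \<Rightarrow> nat \<Rightarrow> int" where
  "site p t = (if t \<le> p then int t else int t - 1)"

definition Phi :: "nat \<Rightarrow> nat \<Rightarrow> (nat \<Rightarrow> nat) \<Rightarrow> (nat \<Rightarrow> int)" where
  "Phi n p \<sigma> = restrict (\<lambda>a. site p (\<sigma> a)) (chips n)"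

definition Xset :: "nat \<Rightarrow> nat \<Rightarrow> (nat \<Rightarrow> int) set" where
  "Xset n p = {c. config_S n p c \<and> (\<forall>a \<in> chips n. int a - (int n + 1 - int p) \<le> c a \<and> c a \<le> int a + int p - 1)}"

lemma chips_eq: "p \<le> n \<Longrightarrow> chips n = {1..(n + 1 - p) + p}"
  by (simp add: chips_def)

lemma site_card:
  assumes "1 \<le> p" "p \<le> n"
  shows "card {t \<in> {1..(n + 1 - p) + p}. site p t = s} =
    (if s = int p then 2 else if 1 \<le> s \<and> s \<le> int n then 1 else 0)"
proof -
  have L: "(n + 1 - p) + p = n + 1" using assms by simp
  consider "s = int p" | "s \<noteq> int p" "1 \<le> s" "s < int p" | "s \<noteq> int p" "int p < s" "s \<le> int n"
    | "s < 1 \<or> s > int n" by linarith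
  then show ?thesis
  proof cases
    case 1
    have "{t \<in> {1..(n + 1 - p) + p}. site p t = s} = {p, p + 1}"
      using 1 assms L by (auto simp: site_def split: if_splits)
    then show ?thesis using 1 by simp
  next
    case 2
    have "{t \<in> {1..(n + 1 - p) + p}. site p t = s} = {nat s}"
      using 2 assms L by (auto simp: site_def split: if_splits)
    then show ?thesis using 2 assms by simp
  next
    case 3
    have "{t \<in> {1..(n + 1 - p) + p}. site p t = s} = {nat s + 1}"
      using 3 assms L by (auto simp: site_def split: if_splits)
    then show ?thesis using 3 by simp
  next
    case 4
    have "{t \<in> {1..(n + 1 - p) + p}. site p t = s} = {}"
      using 4 assms L by (auto simp: site_def split: if_splits)
    then show ?thesis using 4 assms by auto
  qed
qed

lemma Phi_in_X:
  assumes "1 \<le> p" "p \<le> n" "\<sigma> \<in> Perm (n + 1 - p) p"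
  shows "Phi n p \<sigma> \<in> Xset n p"
proof -
  define h where "h = n + 1 - p"
  have L: "h + p = n + 1" using assms by (simp add: h_def)
  have ch: "chips n = {1..h+p}" using L by (simp add: chips_def)
  have pie: "\<sigma> \<in> {1..h+p} \<rightarrow>\<^sub>E {1..h+p}" and con: "\<forall>a \<in> {1..h+p}. a \<le> \<sigma> a + h \<and> \<sigma> a \<le> a + p"
    using assms(3) by (auto simp: Perm_def h_def)
  define c where "c = Phi n p \<sigma>"
  have cv: "\<And>a. a \<in> chips n \<Longrightarrow> c a = site p (\<sigma> a)" by (simp add: c_def Phi_def)
  have sv: "\<And>a. a \<in> chips n \<Longrightarrow> 1 \<le> \<sigma> a \<and> \<sigma> a \<le> n + 1" using pie ch L by (auto simp: PiE_def Pi_def)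
  have c1: "c \<in> chips n \<rightarrow>\<^sub>E {0..int n + 1}"
  proof -
    have "\<forall>a \<in> chips n. c a \<in> {0..int n + 1}"
    proof
      fix a assume a: "a \<in> chips n"
      then show "c a \<in> {0..int n + 1}" using cv[OF a] sv[OF a] by (auto simp: site_def)
    qed
    then show ?thesis by (auto simp: c_def Phi_def PiE_def Pi_def)
  qed
  have cat: "\<And>s. chips_at n c s = {a \<in> {1..h+p}. \<sigma> a \<in> {t. site p t = s}}"
    using cv ch by (auto simp: chips_at_def)
  have cc: "\<And>s. card (chips_at n c s) = (if s = int p then 2 else if 1 \<le> s \<and> s \<le> int n then 1 else 0)"
  proof -
    fix s
    have e1: "card (chips_at n c s) = card {a \<in> {1..h+p}. \<sigma> a \<in> {t. site p t = s}}" by (simp only: cat)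
    have e2: "card {a \<in> {1..h+p}. \<sigma> a \<in> {t. site p t = s}} = card ({t. site p t = s} \<inter> {1..h+p})"
      by (rule Perm_preimage_card[OF assms(3)[folded h_def]])
    have "card (chips_at n c s) = card ({t. site p t = s} \<inter> {1..h+p})" using e1 e2 by simp
    also have "{t. site p t = s} \<inter> {1..h+p} = {t \<in> {1..(n + 1 - p) + p}. site p t = s}" by (auto simp: h_def)
    finally show "card (chips_at n c s) = (if s = int p then 2 else if 1 \<le> s \<and> s \<le> int n then 1 else 0)"
      using site_card[OF assms(1,2)] by simp
  qed
  have cfg: "config_S n p c" unfolding config_S_def
    using c1 cc assms(1,2) by auto
  have bd: "\<forall>a \<in> chips n. int a - (int n + 1 - int p) \<le> c a \<and> c a \<le> int a + int p - 1"
  proof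
    fix a assume a: "a \<in> chips n"
    have "a \<le> \<sigma> a + h" "\<sigma> a \<le> a + p" using con a ch by auto
    moreover have "1 \<le> a" "a \<le> n + 1" using a by (auto simp: chips_def)
    ultimately show "int a - (int n + 1 - int p) \<le> c a \<and> c a \<le> int a + int p - 1"
      using cv[OF a] sv[OF a] assms(1,2) by (auto simp: site_def h_def)
  qed
  show ?thesis using cfg bd by (simp add: Xset_def c_def)
qed

lemma fin_ca[simp]: "finite (chips_at n c s)"
  by (simp add: chips_at_def chips_def)

lemma fiber2:
  assumes p1: "1 \<le> p" and pn: "p \<le> n" and cX: "c \<in> Xset n p"
  shows "card {\<sigma> \<in> Perm (n + 1 - p) p. Phi n p \<sigma> = c} = 2"
proof -
  define h where "h = n + 1 - p"
  have L: "h + p = n + 1" using pn by (simp add: h_def)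
  have ch: "chips n = {1..h+p}" using L by (simp add: chips_def)
  have cfg: "config_S n p c" and bd: "\<forall>a \<in> chips n. int a - (int n + 1 - int p) \<le> c a \<and> c a \<le> int a + int p - 1"
    using cX by (auto simp: Xset_def)
  have pie: "c \<in> chips n \<rightarrow>\<^sub>E {0..int n + 1}" using cfg by (simp add: config_S_def)
  have e0: "chips_at n c 0 = {}" and en: "chips_at n c (int n + 1) = {}"
    using cfg by (auto simp: config_S_def card_eq_0_iff)
  have crange: "\<And>a. a \<in> chips n \<Longrightarrow> 1 \<le> c a \<and> c a \<le> int n"
  proof -
    fix a assume a: "a \<in> chips n"
    have "c a \<in> {0..int n + 1}" using pie a by (auto simp: PiE_def Pi_def)
    moreover have "c a \<noteq> 0" using e0 a by (auto simp: chips_at_def)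
    moreover have "c a \<noteq> int n + 1" using en a by (auto simp: chips_at_def)
    ultimately show "1 \<le> c a \<and> c a \<le> int n" by auto
  qed
  have one: "\<And>a b. a \<in> chips n \<Longrightarrow> b \<in> chips n \<Longrightarrow> c a = c b \<Longrightarrow> c a \<noteq> int p \<Longrightarrow> a = b"
  proof -
    fix a b assume ab: "a \<in> chips n" "b \<in> chips n" "c a = c b" "c a \<noteq> int p"
    have "c a \<in> {1..int n} - {int p}" using crange[OF ab(1)] ab(4) by auto
    then have "card (chips_at n c (c a)) = 1" using cfg by (auto simp: config_S_def)
    moreover have "a \<in> chips_at n c (c a)" "b \<in> chips_at n c (c a)" using ab by (auto simp: chips_at_def)
    ultimately show "a = b" by (metis card_1_singletonE singletonD)
  qed
  have "card (chips_at n c (int p)) = 2" using cfg by (simp add: config_S_def)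
  then obtain \<alpha> \<beta> where ab: "chips_at n c (int p) = {\<alpha>, \<beta>}" "\<alpha> \<noteq> \<beta>" by (meson card_2_iff)
  have abc: "\<alpha> \<in> chips n" "\<beta> \<in> chips n" "c \<alpha> = int p" "c \<beta> = int p" using ab(1) by (auto simp: chips_at_def)
  have atp: "\<And>a. a \<in> chips n \<Longrightarrow> c a = int p \<Longrightarrow> a = \<alpha> \<or> a = \<beta>"
    using ab(1) by (auto simp: chips_at_def)
  define sg where "sg = (\<lambda>u v. (\<lambda>a. if a \<in> chips n then (if c a < int p then nat (c a) else if c a > int p then nat (c a) + 1
      else if a = \<alpha> then u else v) else undefined))"
  define \<sigma>1 where "\<sigma>1 = sg p (p + 1)"
  define \<sigma>2 where "\<sigma>2 = sg (p + 1) p"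
  have sgP: "sg u v \<in> Perm h p" if uv: "{u, v} = {p, p + 1}" for u v
  proof -
    have uv': "u \<in> {p, p+1}" "v \<in> {p, p+1}" "u \<noteq> v" using uv by (auto simp: doubleton_eq_iff)
    have vals: "\<And>a. a \<in> chips n \<Longrightarrow> sg u v a \<in> {1..h+p}"
    proof -
      fix a assume a: "a \<in> chips n"
      show "sg u v a \<in> {1..h+p}" using crange[OF a] uv' L p1 a by (auto simp: sg_def)
    qed
    have pi: "sg u v \<in> {1..h+p} \<rightarrow>\<^sub>E {1..h+p}" using vals ch by (auto simp: PiE_def Pi_def sg_def extensional_def)
    have inj: "inj_on (sg u v) {1..h+p}"
    proof (rule inj_onI)
      fix a b assume a: "a \<in> {1..h+p}" and b: "b \<in> {1..h+p}" and e: "sg u v a = sg u v b"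
      have ac: "a \<in> chips n" "b \<in> chips n" using a b ch by auto
      have ra: "1 \<le> c a" "c a \<le> int n" and rb: "1 \<le> c b" "c b \<le> int n" using crange ac by auto
      consider "c a < int p" | "c a = int p" | "c a > int p" by linarith
      then show "a = b"
      proof cases
        case 1
        consider "c b < int p" | "c b = int p" | "c b > int p" by linarith
        then show ?thesis
        proof cases
          case B1: 1
          then have "nat (c a) = nat (c b)" using e \<open>c a < int p\<close> ac by (simp add: sg_def)
          then have "c a = c b" using ra rb by simp
          then show ?thesis using one ac \<open>c a < int p\<close> by auto
        next
          case 2
          then have "sg u v b \<in> {p, p+1}" using ac uv' by (auto simp: sg_def)
          moreover have "sg u v a < p" using \<open>c a < int p\<close> ac ra by (simp add: sg_def; linarith)
          ultimately show ?thesis using e by auto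
        next
          case 3
          have "sg u v b > p" using 3 ac by (simp add: sg_def; linarith)
          moreover have "sg u v a < p" using \<open>c a < int p\<close> ac ra by (simp add: sg_def; linarith)
          ultimately show ?thesis using e by auto
        qed
      next
        case 2
        consider "c b < int p" | "c b = int p" | "c b > int p" by linarith
        then show ?thesis
        proof cases
          case 1
          then have "sg u v b < p" using ac rb by (simp add: sg_def; linarith)
          moreover have "sg u v a \<in> {p, p+1}" using \<open>c a = int p\<close> ac uv' by (auto simp: sg_def)
          ultimately show ?thesis using e by auto
        next
          case B2: 2
          have "a = \<alpha> \<or> a = \<beta>" "b = \<alpha> \<or> b = \<beta>" using atp ac \<open>c a = int p\<close> B2 by auto
          moreover have "sg u v \<alpha> = u" "sg u v \<beta> = v" using abc ab(2) by (auto simp: sg_def)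
          ultimately show ?thesis using e uv' by auto
        next
          case 3
          have "sg u v b > p + 1" using 3 ac by (simp add: sg_def; linarith)
          moreover have "sg u v a \<in> {p, p+1}" using \<open>c a = int p\<close> ac uv' by (auto simp: sg_def)
          ultimately show ?thesis using e by auto
        qed
      next
        case 3
        consider "c b < int p" | "c b = int p" | "c b > int p" by linarith
        then show ?thesis
        proof cases
          case 1
          then have "sg u v b < p" using ac rb by (simp add: sg_def; linarith)
          moreover have "sg u v a > p" using \<open>c a > int p\<close> ac by (simp add: sg_def; linarith)
          ultimately show ?thesis using e by auto
        next
          case 2
          have "sg u v b \<in> {p, p+1}" using 2 ac uv' by (auto simp: sg_def)
          moreover have "sg u v a > p + 1" using \<open>c a > int p\<close> ac by (simp add: sg_def; linarith)
          ultimately show ?thesis using e by auto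
        next
          case B3: 3
          then have "nat (c a) + 1 = nat (c b) + 1" using e \<open>c a > int p\<close> ac by (simp add: sg_def)
          then have "c a = c b" using ra rb by simp
          then show ?thesis using one ac \<open>c a > int p\<close> by auto
        qed
      qed
    qed
    have con: "\<forall>a \<in> {1..h+p}. a \<le> sg u v a + h \<and> sg u v a \<le> a + p"
    proof
      fix a assume a: "a \<in> {1..h+p}"
      then have ac: "a \<in> chips n" using ch by simp
      have b: "int a - (int n + 1 - int p) \<le> c a" "c a \<le> int a + int p - 1" using bd ac by auto
      have ra: "1 \<le> c a" "c a \<le> int n" using crange ac by auto
      have ai: "1 \<le> a" "a \<le> n + 1" using a L by auto
      consider "c a < int p" | "c a = int p" | "c a > int p" by linarith
      then show "a \<le> sg u v a + h \<and> sg u v a \<le> a + p"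
      proof cases
        case 1 then show ?thesis using ac b ra ai pn by (simp add: sg_def h_def; linarith)
      next
        case 2
        have "sg u v a \<in> {p, p+1}" using 2 ac uv' by (auto simp: sg_def)
        then show ?thesis using ai pn by (auto simp: h_def)
      next
        case 3 then show ?thesis using ac b ra ai pn by (simp add: sg_def h_def; linarith)
      qed
    qed
    show ?thesis using pi inj con by (simp add: Perm_def)
  qed
  have sgPhi: "Phi n p (sg u v) = c" if uv: "{u, v} = {p, p + 1}" for u v
  proof (rule ext)
    fix a
    have uv': "u \<in> {p, p+1}" "v \<in> {p, p+1}" using uv by (auto simp: doubleton_eq_iff)
    show "Phi n p (sg u v) a = c a"
    proof (cases "a \<in> chips n")
      case True
      have ra: "1 \<le> c a" "c a \<le> int n" using crange True by auto
      consider "c a < int p" | "c a = int p" | "c a > int p" by linarith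
      then show ?thesis
      proof cases
        case 1 then show ?thesis using True ra by (simp add: Phi_def sg_def site_def)
      next
        case 2
        have "sg u v a \<in> {p, p+1}" using 2 True uv' by (auto simp: sg_def)
        then show ?thesis using True 2 by (auto simp: Phi_def site_def)
      next
        case 3 then show ?thesis using True ra by (simp add: Phi_def sg_def site_def)
      qed
    next
      case False
      then show ?thesis using pie by (simp add: Phi_def PiE_def extensional_def)
    qed
  qed
  have eqset: "{\<sigma> \<in> Perm h p. Phi n p \<sigma> = c} = {\<sigma>1, \<sigma>2}"
  proof
    show "{\<sigma>1, \<sigma>2} \<subseteq> {\<sigma> \<in> Perm h p. Phi n p \<sigma> = c}"
      using sgP[of p "p+1"] sgP[of "p+1" p] sgPhi[of p "p+1"] sgPhi[of "p+1" p]
      by (auto simp: \<sigma>1_def \<sigma>2_def insert_commute)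
    show "{\<sigma> \<in> Perm h p. Phi n p \<sigma> = c} \<subseteq> {\<sigma>1, \<sigma>2}"
    proof
      fix \<sigma> assume \<sigma>: "\<sigma> \<in> {\<sigma> \<in> Perm h p. Phi n p \<sigma> = c}"
      have sP: "\<sigma> \<in> Perm h p" and ph: "Phi n p \<sigma> = c" using \<sigma> by auto
      have spi: "\<sigma> \<in> {1..h+p} \<rightarrow>\<^sub>E {1..h+p}" and sinj: "inj_on \<sigma> {1..h+p}" using sP by (auto simp: Perm_def)
      have st: "\<And>a. a \<in> chips n \<Longrightarrow> site p (\<sigma> a) = c a"
      proof -
        fix a assume "a \<in> chips n"
        then show "site p (\<sigma> a) = c a" using ph[symmetric] by (simp add: Phi_def)
      qed
      have sr: "\<And>a. a \<in> chips n \<Longrightarrow> 1 \<le> \<sigma> a" using spi ch by (auto simp: PiE_def Pi_def)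
      have lt: "\<And>a. a \<in> chips n \<Longrightarrow> c a < int p \<Longrightarrow> \<sigma> a = nat (c a)"
      proof -
        fix a assume a: "a \<in> chips n" "c a < int p"
        show "\<sigma> a = nat (c a)" using st[OF a(1)] a(2) by (auto simp: site_def split: if_splits)
      qed
      have gt: "\<And>a. a \<in> chips n \<Longrightarrow> c a > int p \<Longrightarrow> \<sigma> a = nat (c a) + 1"
      proof -
        fix a assume a: "a \<in> chips n" "c a > int p"
        show "\<sigma> a = nat (c a) + 1" using st[OF a(1)] a(2) by (auto simp: site_def split: if_splits)
      qed
      have eqp: "\<And>a. a \<in> chips n \<Longrightarrow> c a = int p \<Longrightarrow> \<sigma> a = p \<or> \<sigma> a = p + 1"
      proof -
        fix a assume a: "a \<in> chips n" "c a = int p"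
        show "\<sigma> a = p \<or> \<sigma> a = p + 1" using st[OF a(1)] a(2) by (auto simp: site_def split: if_splits)
      qed
      have "\<sigma> \<alpha> \<noteq> \<sigma> \<beta>" using sinj abc ab(2) ch by (auto dest: inj_onD)
      then have cases: "(\<sigma> \<alpha> = p \<and> \<sigma> \<beta> = p + 1) \<or> (\<sigma> \<alpha> = p + 1 \<and> \<sigma> \<beta> = p)"
        using eqp[OF abc(1) abc(3)] eqp[OF abc(2) abc(4)] by auto
      have agree: "\<sigma> = sg (\<sigma> \<alpha>) (\<sigma> \<beta>)"
      proof (rule ext)
        fix a
        show "\<sigma> a = sg (\<sigma> \<alpha>) (\<sigma> \<beta>) a"
        proof (cases "a \<in> chips n")
          case True
          consider "c a < int p" | "c a = int p" | "c a > int p" by linarith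
          then show ?thesis
          proof cases
            case 1 then show ?thesis using True lt by (simp add: sg_def)
          next
            case 2
            then have "a = \<alpha> \<or> a = \<beta>" using atp True by auto
            then show ?thesis using True 2 ab(2) by (auto simp: sg_def)
          next
            case 3 then show ?thesis using True gt by (simp add: sg_def)
          qed
        next
          case False
          then have "a \<notin> {1..h+p}" using ch by simp
          then show ?thesis using spi False by (simp add: sg_def PiE_def extensional_def)
        qed
      qed
      show "\<sigma> \<in> {\<sigma>1, \<sigma>2}" using cases agree by (auto simp: \<sigma>1_def \<sigma>2_def)
    qed
  qed
  have ne: "\<sigma>1 \<noteq> \<sigma>2"
  proof
    assume "\<sigma>1 = \<sigma>2"
    then have "\<sigma>1 \<alpha> = \<sigma>2 \<alpha>" by simp
    then show False using abc by (simp add: \<sigma>1_def \<sigma>2_def sg_def)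
  qed
  show ?thesis using eqset ne by (simp add: h_def)
qed

lemma finite_Xset: "finite (Xset n p)"
proof -
  have "Xset n p \<subseteq> chips n \<rightarrow>\<^sub>E {0..int n + 1}" by (auto simp: Xset_def config_S_def)
  moreover have "finite (chips n \<rightarrow>\<^sub>E {0..int n + 1})" by (simp add: finite_PiE chips_def)
  ultimately show ?thesis by (rule finite_subset)
qed

lemma card_X:
  assumes "1 \<le> p" "p \<le> n"
  shows "2 * card (Xset n p) = polyB (n + 1 - p) p"
proof -
  have eq: "Perm (n + 1 - p) p = (\<Union>c \<in> Xset n p. {\<sigma> \<in> Perm (n + 1 - p) p. Phi n p \<sigma> = c})"
    using Phi_in_X[OF assms] by auto
  have "card (Perm (n + 1 - p) p) = (\<Sum>c \<in> Xset n p. card {\<sigma> \<in> Perm (n + 1 - p) p. Phi n p \<sigma> = c})"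
    by (subst eq, rule card_UN_disjoint) (auto simp: finite_Xset)
  also have "\<dots> = (\<Sum>c \<in> Xset n p. 2)" using fiber2[OF assms] by simp
  also have "\<dots> = 2 * card (Xset n p)" by simp
  finally show ?thesis using card_Perm_polyB by simp
qed


definition below :: "nat \<Rightarrow> (nat \<Rightarrow> int) \<Rightarrow> int \<Rightarrow> nat" where
  "below n c j = card {a \<in> chips n. c a \<le> j}"

definition Inv :: "nat \<Rightarrow> (nat \<Rightarrow> int) \<Rightarrow> bool" where
  "Inv n c \<longleftrightarrow> (\<forall>a \<in> chips n. 0 \<le> c a \<and> c a \<le> int n + 1) \<and>
     (\<forall>j. -1 \<le> j \<and> j \<le> int n + 1 \<longrightarrow> int (below n c j) = j \<or> int (below n c j) = j + 1)"

lemma finite_chips[simp]: "finite (chips n)" by (simp add: chips_def)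
lemma card_chips[simp]: "card (chips n) = n + 1" by (simp add: chips_def)

lemma finite_chips_at[simp]: "finite (chips_at n c s)"
  by (simp add: chips_at_def)

lemma below_split: "below n c j = below n c (j - 1) + card (chips_at n c j)"
proof -
  have "{a \<in> chips n. c a \<le> j} = {a \<in> chips n. c a \<le> j - 1} \<union> chips_at n c j"
    by (auto simp: chips_at_def)
  moreover have "{a \<in> chips n. c a \<le> j - 1} \<inter> chips_at n c j = {}"
    by (auto simp: chips_at_def)
  ultimately show ?thesis unfolding below_def
    by (simp add: card_Un_disjoint chips_at_def)
qed

lemma below_neg: "(\<forall>a \<in> chips n. 0 \<le> c a) \<Longrightarrow> j < 0 \<Longrightarrow> below n c j = 0"
  unfolding below_def by (auto intro!: arg_cong[where f=card])

lemma below_top: "(\<forall>a \<in> chips n. c a \<le> int n + 1) \<Longrightarrow> int n + 1 \<le> j \<Longrightarrow> below n c j = n + 1"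
proof -
  assume "\<forall>a \<in> chips n. c a \<le> int n + 1" "int n + 1 \<le> j"
  then have "{a \<in> chips n. c a \<le> j} = chips n" by force
  then show ?thesis unfolding below_def by simp
qed

lemma Inv_card_le2:
  assumes "Inv n c"
  shows "card (chips_at n c i) \<le> 2"
proof -
  have r: "\<forall>a \<in> chips n. 0 \<le> c a \<and> c a \<le> int n + 1" using assms by (simp add: Inv_def)
  show ?thesis
  proof (cases "0 \<le> i \<and> i \<le> int n + 1")
    case True
    then have "int (below n c i) \<le> i + 1" "int (below n c (i - 1)) \<ge> i - 1"
      using assms unfolding Inv_def by (smt (verit))+
    then show ?thesis using below_split[of n c i] by linarith
  next
    case False
    then have "chips_at n c i = {}" using r by (auto simp: chips_at_def)
    then show ?thesis by simp
  qed
qed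

lemma Inv_at2:
  assumes "Inv n c" "\<alpha> \<in> chips n" "\<beta> \<in> chips n" "\<alpha> \<noteq> \<beta>" "c \<alpha> = i" "c \<beta> = i"
  shows "chips_at n c i = {\<alpha>, \<beta>}" "1 \<le> i" "i \<le> int n"
    "int (below n c (i - 1)) = i - 1" "int (below n c i) = i + 1"
proof -
  have r: "\<forall>a \<in> chips n. 0 \<le> c a \<and> c a \<le> int n + 1" using assms by (simp add: Inv_def)
  have sub: "{\<alpha>, \<beta>} \<subseteq> chips_at n c i" using assms by (auto simp: chips_at_def)
  then have ge: "card (chips_at n c i) \<ge> 2" using assms(4)
    by (metis card_2_iff card_mono finite_chips_at)
  have le: "card (chips_at n c i) \<le> 2" using Inv_card_le2[OF assms(1)] .
  have eq2: "card (chips_at n c i) = 2" using ge le by simp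
  show "chips_at n c i = {\<alpha>, \<beta>}"
    using sub eq2 assms(4) by (metis card_2_iff card_subset_eq finite_chips_at)
  have i0: "0 \<le> i" "i \<le> int n + 1" using r assms by auto
  have a: "int (below n c i) \<le> i + 1" "int (below n c (i - 1)) \<ge> i - 1"
    using assms(1) i0 unfolding Inv_def by (smt (verit))+
  have sp: "int (below n c i) = int (below n c (i - 1)) + 2" using below_split[of n c i] eq2 by simp
  show b1: "int (below n c (i - 1)) = i - 1" "int (below n c i) = i + 1" using a sp by linarith+
  show "1 \<le> i"
  proof (rule ccontr)
    assume "\<not> 1 \<le> i" then have "i = 0" using i0 by simp
    then show False using b1 below_neg[of n c "-1"] r by simp
  qed
  show "i \<le> int n"
  proof (rule ccontr)
    assume "\<not> i \<le> int n" then have "i = int n + 1" using i0 by simp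
    then show False using b1 below_top[of n c i] r by simp
  qed
qed

lemma below_update:
  assumes "\<alpha> \<in> chips n" "\<beta> \<in> chips n" "\<alpha> \<noteq> \<beta>" "c \<alpha> = i" "c \<beta> = i"
  shows "int (below n (c(\<alpha> := i - 1, \<beta> := i + 1)) j) =
     int (below n c j) + (if j = i - 1 then 1 else 0) - (if j = i then 1 else 0)"
proof -
  let ?c = "c(\<alpha> := i - 1, \<beta> := i + 1)"
  define S where "S = {a \<in> chips n. c a \<le> j}"
  define S' where "S' = {a \<in> chips n. ?c a \<le> j}"
  have fS: "finite S" by (simp add: S_def)
  consider "j < i - 1" | "j = i - 1" | "j = i" | "j > i" by linarith
  then show ?thesis
  proof cases
    case 1
    then have "S' = S" using assms by (auto simp: S_def S'_def)
    then show ?thesis using 1 by (simp add: below_def S_def S'_def)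
  next
    case 2
    then have "S' = insert \<alpha> S" "\<alpha> \<notin> S" using assms by (auto simp: S_def S'_def)
    then show ?thesis using 2 fS by (simp add: below_def S_def S'_def)
  next
    case 3
    then have e: "S' = S - {\<beta>}" and b: "\<beta> \<in> S" using assms by (auto simp: S_def S'_def)
    have "card S > 0" using b fS card_gt_0_iff by blast
    then have "int (card S') = int (card S) - 1" using e b fS by (simp add: card_Diff_singleton of_nat_diff)
    then show ?thesis using 3 by (simp add: below_def S_def S'_def)
  next
    case 4
    then have "S' = S" using assms by (auto simp: S_def S'_def)
    then show ?thesis using 4 by (simp add: below_def S_def S'_def)
  qed
qed

lemma step_Inv:
  assumes "Inv n c" "topple_step n c c'"
  shows "Inv n c'"
proof -
  obtain \<alpha> \<beta> where ab: "\<alpha> \<in> chips n" "\<beta> \<in> chips n" "\<alpha> < \<beta>" "c \<alpha> = c \<beta>"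
     "c' = c(\<alpha> := c \<alpha> - 1, \<beta> := c \<beta> + 1)"
    using assms(2) unfolding topple_step_def by blast
  define i where "i = c \<alpha>"
  have ci: "c \<alpha> = i" "c \<beta> = i" using ab i_def by auto
  have ne: "\<alpha> \<noteq> \<beta>" using ab by simp
  note at = Inv_at2[OF assms(1) ab(1,2) ne ci]
  have c': "c' = c(\<alpha> := i - 1, \<beta> := i + 1)" using ab ci by simp
  have r: "\<forall>a \<in> chips n. 0 \<le> c a \<and> c a \<le> int n + 1" using assms by (simp add: Inv_def)
  have r': "\<forall>a \<in> chips n. 0 \<le> c' a \<and> c' a \<le> int n + 1" using r at c' by auto
  have "\<forall>j. -1 \<le> j \<and> j \<le> int n + 1 \<longrightarrow> int (below n c' j) = j \<or> int (below n c' j) = j + 1"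
  proof (intro allI impI)
    fix j assume j: "-1 \<le> j \<and> j \<le> int n + 1"
    have u: "int (below n c' j) = int (below n c j) + (if j = i - 1 then 1 else 0) - (if j = i then 1 else 0)"
      using below_update[OF ab(1,2) ne ci] c' by simp
    have "int (below n c j) = j \<or> int (below n c j) = j + 1" using assms(1) j unfolding Inv_def by blast
    then show "int (below n c' j) = j \<or> int (below n c' j) = j + 1"
      using u at(4,5) by auto
  qed
  then show ?thesis using r' by (simp add: Inv_def)
qed

lemma steps_Inv: "(topple_step n)\<^sup>*\<^sup>* c c' \<Longrightarrow> Inv n c \<Longrightarrow> Inv n c'"
  by (induction rule: rtranclp_induct) (auto intro: step_Inv)

lemma diamond:
  assumes "Inv n c" "topple_step n c c1" "topple_step n c c2"
  shows "c1 = c2 \<or> (\<exists>c3. topple_step n c1 c3 \<and> topple_step n c2 c3)"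
proof -
  obtain \<alpha>1 \<beta>1 where s1: "\<alpha>1 \<in> chips n" "\<beta>1 \<in> chips n" "\<alpha>1 < \<beta>1" "c \<alpha>1 = c \<beta>1"
     "c1 = c(\<alpha>1 := c \<alpha>1 - 1, \<beta>1 := c \<beta>1 + 1)"
    using assms(2) unfolding topple_step_def by blast
  obtain \<alpha>2 \<beta>2 where s2: "\<alpha>2 \<in> chips n" "\<beta>2 \<in> chips n" "\<alpha>2 < \<beta>2" "c \<alpha>2 = c \<beta>2"
     "c2 = c(\<alpha>2 := c \<alpha>2 - 1, \<beta>2 := c \<beta>2 + 1)"
    using assms(3) unfolding topple_step_def by blast
  show ?thesis
  proof (cases "c \<alpha>1 = c \<alpha>2")
    case True
    have e1: "chips_at n c (c \<alpha>1) = {\<alpha>1, \<beta>1}"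
      using Inv_at2(1)[OF assms(1) s1(1,2) _ refl] s1 by simp
    have e2: "chips_at n c (c \<alpha>1) = {\<alpha>2, \<beta>2}"
      using Inv_at2(1)[OF assms(1) s2(1,2) _ refl] s2 True by simp
    have "\<alpha>1 = \<alpha>2 \<and> \<beta>1 = \<beta>2" using e1 e2 s1(3) s2(3)
      by (metis doubleton_eq_iff order_less_asym)
    then show ?thesis using s1 s2 by simp
  next
    case False
    have d: "\<alpha>1 \<noteq> \<alpha>2" "\<alpha>1 \<noteq> \<beta>2" "\<beta>1 \<noteq> \<alpha>2" "\<beta>1 \<noteq> \<beta>2" using False s1(4) s2(4) by auto
    define c3 where "c3 = c(\<alpha>1 := c \<alpha>1 - 1, \<beta>1 := c \<beta>1 + 1, \<alpha>2 := c \<alpha>2 - 1, \<beta>2 := c \<beta>2 + 1)"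
    have "topple_step n c1 c3" unfolding topple_step_def
      apply (rule bexI[of _ \<alpha>2], rule bexI[of _ \<beta>2])
      using s1 s2 d by (auto simp: c3_def)
    moreover have "topple_step n c2 c3" unfolding topple_step_def
      apply (rule bexI[of _ \<alpha>1], rule bexI[of _ \<beta>1])
      using s1 s2 d by (auto simp: c3_def fun_upd_twist)
    ultimately show ?thesis by blast
  qed
qed

lemma strip:
  assumes "(topple_step n)\<^sup>*\<^sup>* c b" "Inv n c" "topple_step n c x"
  shows "\<exists>z. (topple_step n)\<^sup>*\<^sup>* x z \<and> (z = b \<or> topple_step n b z)"
  using assms(1)
proof (induction rule: rtranclp_induct)
  case base
  then show ?case using assms(3) by blast
next
  case (step b b')
  then obtain z where z: "(topple_step n)\<^sup>*\<^sup>* x z" "z = b \<or> topple_step n b z" by blast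
  have ib: "Inv n b" using steps_Inv[OF step(1) assms(2)] .
  show ?case
  proof (cases "z = b")
    case True
    have "(topple_step n)\<^sup>*\<^sup>* x b'" using z(1) True step(2) by simp
    then show ?thesis by blast
  next
    case False
    then have bz: "topple_step n b z" using z(2) by auto
    from diamond[OF ib bz step(2)] show ?thesis
    proof
      assume "z = b'" then show ?thesis using z by auto
    next
      assume "\<exists>c3. topple_step n z c3 \<and> topple_step n b' c3"
      then obtain w where w: "topple_step n z w" "topple_step n b' w" by blast
      have "(topple_step n)\<^sup>*\<^sup>* x w" using z(1) w(1) by simp
      then show ?thesis using w(2) by blast
    qed
  qed
qed

lemma confl:
  assumes "(topple_step n)\<^sup>*\<^sup>* c a" "Inv n c" "(topple_step n)\<^sup>*\<^sup>* c b"
  shows "\<exists>z. (topple_step n)\<^sup>*\<^sup>* a z \<and> (topple_step n)\<^sup>*\<^sup>* b z"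
  using assms(1)
proof (induction rule: rtranclp_induct)
  case base
  then show ?case using assms(3) by blast
next
  case (step a a')
  then obtain z where z: "(topple_step n)\<^sup>*\<^sup>* a z" "(topple_step n)\<^sup>*\<^sup>* b z" by blast
  have ia: "Inv n a" using steps_Inv[OF step(1) assms(2)] .
  obtain w where w: "(topple_step n)\<^sup>*\<^sup>* a' w" "w = z \<or> topple_step n z w"
    using strip[OF z(1) ia step(2)] by blast
  have "(topple_step n)\<^sup>*\<^sup>* b w"
  proof (cases "w = z")
    case True then show ?thesis using z(2) by simp
  next
    case False then have "topple_step n z w" using w(2) by simp
    then show ?thesis using z(2) by simp
  qed
  then show ?case using w(1) by blast
qed

definition terminal :: "nat \<Rightarrow> (nat \<Rightarrow> int) \<Rightarrow> bool" where
  "terminal n c \<longleftrightarrow> (\<forall>c'. \<not> topple_step n c c')"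

lemma terminal_steps: "(topple_step n)\<^sup>*\<^sup>* a z \<Longrightarrow> terminal n a \<Longrightarrow> z = a"
proof (induction rule: converse_rtranclp_induct)
  case base then show ?case by simp
next
  case (step y z) then show ?case by (simp add: terminal_def)
qed

lemma unique_terminal:
  assumes "Inv n c" "(topple_step n)\<^sup>*\<^sup>* c a" "(topple_step n)\<^sup>*\<^sup>* c b" "terminal n a" "terminal n b"
  shows "a = b"
proof -
  obtain z where z: "(topple_step n)\<^sup>*\<^sup>* a z" "(topple_step n)\<^sup>*\<^sup>* b z" using confl[OF assms(2,1,3)] by blast
  have "z = a" using terminal_steps[OF z(1) assms(4)] .
  moreover have "z = b" using terminal_steps[OF z(2) assms(5)] .
  ultimately show ?thesis by simp
qed

lemma inj_terminal: "inj_on c (chips n) \<Longrightarrow> terminal n c"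
  unfolding terminal_def topple_step_def by (auto dest: inj_onD)

lemma identity_terminal: "identity_final n c \<Longrightarrow> terminal n c"
  unfolding terminal_def topple_step_def identity_final_def by fastforce


definition blk :: "nat \<Rightarrow> (nat \<Rightarrow> int) \<Rightarrow> int \<Rightarrow> int \<Rightarrow> nat set" where
  "blk n c l k = {a \<in> chips n. l \<le> c a \<and> c a \<le> k}"

lemma finite_blk[simp]: "finite (blk n c l k)" by (simp add: blk_def)

lemma chips_at_upd:
  assumes "x \<in> chips n" "y \<in> chips n" "x \<noteq> y"
  shows "chips_at n (c(x := u, y := v)) s =
    (chips_at n c s - {x, y}) \<union> (if s = u then {x} else {}) \<union> (if s = v then {y} else {})"
  using assms by (auto simp: chips_at_def)

lemma step_of_pair:
  assumes "chips_at n c k = {x, y}" "x < y"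
  shows "topple_step n c (c(x := k - 1, y := k + 1))"
proof -
  have "x \<in> chips n" "y \<in> chips n" "c x = k" "c y = k" using assms(1) by (auto simp: chips_at_def)
  then have "x < y \<and> c x = c y \<and> c(x := k - 1, y := k + 1) = c(x := c x - 1, y := c y + 1)"
    using assms(2) by simp
  note P = this \<open>x \<in> chips n\<close> \<open>y \<in> chips n\<close>
  show ?thesis unfolding topple_step_def
    apply (rule bexI[of _ x])
     apply (rule bexI[of _ y])
    using P by auto
qed

lemma card2_pair:
  assumes "card S = 2"
  obtains x y where "S = {x, y}" "x < (y::nat)"
proof -
  obtain x y where "S = {x, y}" "x \<noteq> y" using assms card_2_iff by metis
  then show ?thesis using that
    by (metis insert_commute linorder_neq_iff)
qed

lemma Min_remove_other:
  assumes "finite B" "x \<in> B" "x < (y::nat)"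
  shows "Min (B - {y}) = Min B"
proof -
  have "Min B \<le> x" using assms by simp
  then have "Min B \<noteq> y" using assms(3) by linarith
  moreover have "Min B \<in> B" using assms Min_in by blast
  ultimately have m: "Min B \<in> B - {y}" by simp
  have "\<forall>b \<in> B - {y}. Min B \<le> b" using assms by simp
  then show ?thesis using m assms(1)
    by (metis Min_eqI finite_Diff)
qed

lemma pass:
  assumes "l \<le> k" "card (chips_at n c k) = 2" "\<forall>s. l \<le> s \<and> s < k \<longrightarrow> card (chips_at n c s) = 1"
    "chips_at n c (l - 1) = {}"
  shows "\<exists>d. (topple_step n)\<^sup>*\<^sup>* c d \<and> (\<forall>a. a \<notin> blk n c l k \<longrightarrow> d a = c a) \<and>
     d (Min (blk n c l k)) = l - 1 \<and>
     (\<forall>a \<in> blk n c l k - {Min (blk n c l k)}. l + 1 \<le> d a \<and> d a \<le> k + 1) \<and>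
     (\<forall>s. l + 1 \<le> s \<and> s \<le> k + 1 \<longrightarrow> card {a \<in> blk n c l k - {Min (blk n c l k)}. d a = s} = 1) \<and>
     (\<forall>a \<in> blk n c l k - {Min (blk n c l k)}. d a = c a + 1 \<or>
        (d a \<le> c a \<and> (\<forall>b \<in> chips_at n c k. a \<le> b) \<and> k + 1 - d a \<le> int (card {b \<in> blk n c l k. a < b})))"
  using assms
proof (induction "nat (k - l)" arbitrary: c k)
  case 0
  then have lk: "l = k" by simp
  obtain x y where xy: "chips_at n c k = {x, y}" "x < y" using card2_pair[OF 0(3)] by blast
  have xyc: "x \<in> chips n" "y \<in> chips n" "c x = k" "c y = k" using xy(1) by (auto simp: chips_at_def)
  define d where "d = c(x := k - 1, y := k + 1)"
  have st: "topple_step n c d" unfolding d_def using step_of_pair[OF xy] .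
  have B: "blk n c l k = {x, y}"
  proof -
    have "blk n c l k = chips_at n c k" using lk by (auto simp: blk_def chips_at_def)
    then show ?thesis using xy(1) by simp
  qed
  have M: "Min (blk n c l k) = x" using B xy(2) by simp
  have R: "blk n c l k - {Min (blk n c l k)} = {y}" using B M xy(2) by auto
  have dx: "d x = l - 1" using lk xy(2) by (simp add: d_def)
  have dy: "d y = k + 1" by (simp add: d_def)
  have fr: "\<forall>a. a \<notin> blk n c l k \<longrightarrow> d a = c a" using B by (simp add: d_def)
  have cnt: "(\<forall>s. l + 1 \<le> s \<and> s \<le> k + 1 \<longrightarrow> card {a \<in> blk n c l k - {Min (blk n c l k)}. d a = s} = 1)"
  proof (intro allI impI)
    fix s assume "l + 1 \<le> s \<and> s \<le> k + 1"
    then have "s = k + 1" using lk by simp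
    then have "{a \<in> blk n c l k - {Min (blk n c l k)}. d a = s} = {y}" using R dy by auto
    then show "card {a \<in> blk n c l k - {Min (blk n c l k)}. d a = s} = 1" by simp
  qed
  have rng: "\<forall>a \<in> blk n c l k - {Min (blk n c l k)}. l + 1 \<le> d a \<and> d a \<le> k + 1"
    using R dy lk by simp
  have pr: "\<forall>a \<in> blk n c l k - {Min (blk n c l k)}. d a = c a + 1 \<or>
        (d a \<le> c a \<and> (\<forall>b \<in> chips_at n c k. a \<le> b) \<and> k + 1 - d a \<le> int (card {b \<in> blk n c l k. a < b}))"
    using R dy xyc by simp
  show ?case
    apply (rule exI[of _ d])
    using st fr M dx rng cnt pr by simp
next
  case (Suc m)
  then have lk: "l < k" by simp
  obtain x y where xy: "chips_at n c k = {x, y}" "x < y" using card2_pair[OF Suc(4)] by blast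
  have xyc: "x \<in> chips n" "y \<in> chips n" "c x = k" "c y = k" using xy(1) by (auto simp: chips_at_def)
  have xny: "x \<noteq> y" using xy by simp
  define c1 where "c1 = c(x := k - 1, y := k + 1)"
  have st: "topple_step n c c1" unfolding c1_def using step_of_pair[OF xy] .
  have ca: "\<And>s. chips_at n c1 s = (chips_at n c s - {x, y}) \<union> (if s = k - 1 then {x} else {}) \<union> (if s = k + 1 then {y} else {})"
    unfolding c1_def using chips_at_upd[OF xyc(1,2) xny] .
  have xnot: "x \<notin> chips_at n c (k - 1)" "y \<notin> chips_at n c (k - 1)" using xyc by (auto simp: chips_at_def)
  have h1: "m = nat (k - 1 - l)" using Suc(2) by simp
  have h2: "l \<le> k - 1" using lk by simp
  have ck1: "chips_at n c1 (k - 1) = insert x (chips_at n c (k - 1))" using ca xnot by auto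
  have h3: "card (chips_at n c1 (k - 1)) = 2"
  proof -
    have "card (chips_at n c (k - 1)) = 1" using Suc(5) h2 lk by simp
    then show ?thesis using ck1 xnot by simp
  qed
  have h4: "\<forall>s. l \<le> s \<and> s < k - 1 \<longrightarrow> card (chips_at n c1 s) = 1"
  proof (intro allI impI)
    fix s assume s: "l \<le> s \<and> s < k - 1"
    have "chips_at n c s \<inter> {x, y} = {}" using xyc s by (auto simp: chips_at_def)
    then have "chips_at n c1 s = chips_at n c s" using ca s by auto
    then show "card (chips_at n c1 s) = 1" using Suc(5) s by simp
  qed
  have h5: "chips_at n c1 (l - 1) = {}"
  proof -
    have "chips_at n c1 (l - 1) = chips_at n c (l - 1) - {x, y}" using ca lk by auto
    then show ?thesis using Suc(6) by simp
  qed
  obtain d where d: "(topple_step n)\<^sup>*\<^sup>* c1 d" "\<forall>a. a \<notin> blk n c1 l (k - 1) \<longrightarrow> d a = c1 a"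
     "d (Min (blk n c1 l (k - 1))) = l - 1"
     "\<forall>a \<in> blk n c1 l (k - 1) - {Min (blk n c1 l (k - 1))}. l + 1 \<le> d a \<and> d a \<le> k - 1 + 1"
     "\<forall>s. l + 1 \<le> s \<and> s \<le> k - 1 + 1 \<longrightarrow> card {a \<in> blk n c1 l (k - 1) - {Min (blk n c1 l (k - 1))}. d a = s} = 1"
     "\<forall>a \<in> blk n c1 l (k - 1) - {Min (blk n c1 l (k - 1))}. d a = c1 a + 1 \<or>
        (d a \<le> c1 a \<and> (\<forall>b \<in> chips_at n c1 (k - 1). a \<le> b) \<and> k - 1 + 1 - d a \<le> int (card {b \<in> blk n c1 l (k - 1). a < b}))"
    using Suc(1)[OF h1 h2 h3 h4 h5] by blast
  define B where "B = blk n c l k"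
  have B1: "blk n c1 l (k - 1) = B - {y}"
  proof
    show "blk n c1 l (k - 1) \<subseteq> B - {y}"
      using lk xyc xny by (auto simp: blk_def B_def c1_def split: if_splits)
    show "B - {y} \<subseteq> blk n c1 l (k - 1)"
    proof
      fix a assume a: "a \<in> B - {y}"
      show "a \<in> blk n c1 l (k - 1)"
      proof (cases "a = x")
        case True then show ?thesis using lk xyc xny by (auto simp: blk_def c1_def)
      next
        case False
        then have "c a \<noteq> k" using a xy(1) by (auto simp: chips_at_def B_def blk_def)
        then show ?thesis using a False by (auto simp: blk_def B_def c1_def)
      qed
    qed
  qed
  have xB: "x \<in> B" "y \<in> B" using xyc lk by (auto simp: B_def blk_def)
  have fB: "finite B" by (simp add: B_def)
  have MB: "Min (B - {y}) = Min B" using Min_remove_other[OF fB xB(1) xy(2)] .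
  have MBx: "Min B \<le> x" using fB xB by simp
  have MBy: "Min B \<noteq> y" using MBx xy(2) by simp
  have rest: "B - {Min B} = insert y (B - {y} - {Min B})" using xB MBy by auto
  have dy: "d y = k + 1" using d(2) B1 c1_def by simp
  have steps: "(topple_step n)\<^sup>*\<^sup>* c d" using st d(1) by simp
  have frame: "\<forall>a. a \<notin> B \<longrightarrow> d a = c a"
  proof (intro allI impI)
    fix a assume "a \<notin> B"
    then have "a \<notin> blk n c1 l (k - 1)" "a \<noteq> x" "a \<noteq> y" using B1 xB by auto
    then show "d a = c a" using d(2) by (simp add: c1_def)
  qed
  have dmin: "d (Min B) = l - 1" using d(3) B1 MB by simp
  have rng: "\<forall>a \<in> B - {Min B}. l + 1 \<le> d a \<and> d a \<le> k + 1"
  proof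
    fix a assume a: "a \<in> B - {Min B}"
    show "l + 1 \<le> d a \<and> d a \<le> k + 1"
    proof (cases "a = y")
      case True then show ?thesis using dy lk by simp
    next
      case False
      then have "a \<in> blk n c1 l (k - 1) - {Min (blk n c1 l (k - 1))}" using a B1 MB by simp
      then have "l + 1 \<le> d a \<and> d a \<le> k - 1 + 1" using d(4) by blast
      then show ?thesis by simp
    qed
  qed
  have cnt: "\<forall>s. l + 1 \<le> s \<and> s \<le> k + 1 \<longrightarrow> card {a \<in> B - {Min B}. d a = s} = 1"
  proof (intro allI impI)
    fix s assume s: "l + 1 \<le> s \<and> s \<le> k + 1"
    show "card {a \<in> B - {Min B}. d a = s} = 1"
    proof (cases "s = k + 1")
      case True
      have "{a \<in> B - {Min B}. d a = s} = {y}"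
      proof -
        have hk: "\<forall>a \<in> B - {y} - {Min B}. d a \<le> k" using d(4) B1 MB by auto
        have ay: "a = y" if "a \<in> B - {Min B}" "d a = s" for a
        proof (rule ccontr)
          assume "a \<noteq> y" then have "a \<in> B - {y} - {Min B}" using that by simp
          then have "d a \<le> k" using hk by blast
          then show False using that True by simp
        qed
        have yin: "y \<in> B - {Min B}" using xB MBy by simp
        show ?thesis
        proof
          show "{a \<in> B - {Min B}. d a = s} \<subseteq> {y}" using ay by blast
          show "{y} \<subseteq> {a \<in> B - {Min B}. d a = s}" using yin dy True by simp
        qed
      qed
      then show ?thesis by simp
    next
      case False
      have "{a \<in> B - {Min B}. d a = s} = {a \<in> B - {y} - {Min B}. d a = s}"
        using rest dy False by auto
      then show ?thesis using d(5) B1 MB s False by simp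
    qed
  qed
  have prp: "\<forall>a \<in> B - {Min B}. d a = c a + 1 \<or>
        (d a \<le> c a \<and> (\<forall>b \<in> chips_at n c k. a \<le> b) \<and> k + 1 - d a \<le> int (card {b \<in> B. a < b}))"
  proof
    fix a assume a: "a \<in> B - {Min B}"
    show "d a = c a + 1 \<or>
        (d a \<le> c a \<and> (\<forall>b \<in> chips_at n c k. a \<le> b) \<and> k + 1 - d a \<le> int (card {b \<in> B. a < b}))"
    proof (cases "a = y")
      case True then show ?thesis using dy xyc by simp
    next
      case False
      then have a1: "a \<in> blk n c1 l (k - 1) - {Min (blk n c1 l (k - 1))}" using a B1 MB by auto
      have ih: "d a = c1 a + 1 \<or>
        (d a \<le> c1 a \<and> (\<forall>b \<in> chips_at n c1 (k - 1). a \<le> b) \<and> k - 1 + 1 - d a \<le> int (card {b \<in> blk n c1 l (k - 1). a < b}))"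
        using d(6) a1 by blast
      have cardeq: "a < y \<Longrightarrow> card {b \<in> B. a < b} = card {b \<in> blk n c1 l (k - 1). a < b} + 1"
      proof -
        assume ay: "a < y"
        have "{b \<in> B. a < b} = insert y {b \<in> blk n c1 l (k - 1). a < b}" using B1 xB ay by auto
        moreover have "y \<notin> {b \<in> blk n c1 l (k - 1). a < b}" using B1 by auto
        ultimately show ?thesis by (simp add: B_def)
      qed
      show ?thesis
      proof (cases "a = x")
        case True
        have c1x: "c1 x = k - 1" using xny by (simp add: c1_def)
        have allb: "\<forall>b \<in> chips_at n c k. x \<le> b" using xy by auto
        from ih show ?thesis
        proof
          assume "d a = c1 a + 1"
          then have "d x = k" using True c1x by simp
          moreover have "card {b \<in> B. x < b} \<ge> 1"
          proof -
            have "y \<in> {b \<in> B. x < b}" using xB xy by simp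
            moreover have "finite {b \<in> B. x < b}" using fB by simp
            ultimately have "card {b \<in> B. x < b} > 0" using card_gt_0_iff by blast
            then show ?thesis by simp
          qed
          ultimately show ?thesis using True allb xyc by simp
        next
          assume h: "d a \<le> c1 a \<and> (\<forall>b \<in> chips_at n c1 (k - 1). a \<le> b) \<and> k - 1 + 1 - d a \<le> int (card {b \<in> blk n c1 l (k - 1). a < b})"
          have "card {b \<in> B. x < b} = card {b \<in> blk n c1 l (k - 1). x < b} + 1" using cardeq True xy by simp
          then show ?thesis using h True allb xyc c1x by simp
        qed
      next
        case False
        have c1a: "c1 a = c a" using False \<open>a \<noteq> y\<close> by (simp add: c1_def)
        from ih show ?thesis
        proof
          assume "d a = c1 a + 1" then show ?thesis using c1a by simp
        next
          assume h: "d a \<le> c1 a \<and> (\<forall>b \<in> chips_at n c1 (k - 1). a \<le> b) \<and> k - 1 + 1 - d a \<le> int (card {b \<in> blk n c1 l (k - 1). a < b})"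
          have ax: "a \<le> x" using h ck1 by auto
          then have ay: "a < y" using xy by simp
          have allb: "\<forall>b \<in> chips_at n c k. a \<le> b" using xy ax ay by auto
          have "card {b \<in> B. a < b} = card {b \<in> blk n c1 l (k - 1). a < b} + 1" using cardeq ay by simp
          then show ?thesis using h allb c1a by simp
        qed
      qed
    qed
  qed
  show ?case
    apply (rule exI[of _ d])
    using steps frame dmin rng cnt prp unfolding B_def by blast
qed


definition win :: "nat \<Rightarrow> (nat \<Rightarrow> int) \<Rightarrow> int \<Rightarrow> int \<Rightarrow> nat set" where
  "win n c e m = {a \<in> chips n. e \<le> c a \<and> c a \<le> e + m + 1}"

definition occ :: "nat \<Rightarrow> (nat \<Rightarrow> int) \<Rightarrow> int \<Rightarrow> int \<Rightarrow> int \<Rightarrow> bool" where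
  "occ n c e m q \<longleftrightarrow> chips_at n c e = {} \<and> chips_at n c (e + m + 1) = {} \<and>
     card (chips_at n c (e + q)) = 2 \<and>
     (\<forall>s. e + 1 \<le> s \<and> s \<le> e + m \<and> s \<noteq> e + q \<longrightarrow> card (chips_at n c s) = 1)"

definition sorted_on :: "nat set \<Rightarrow> (nat \<Rightarrow> int) \<Rightarrow> bool" where
  "sorted_on W d \<longleftrightarrow> (\<forall>a \<in> W. \<forall>b \<in> W. a < b \<longrightarrow> d a < d b)"

definition bnd :: "nat set \<Rightarrow> (nat \<Rightarrow> int) \<Rightarrow> int \<Rightarrow> int \<Rightarrow> bool" where
  "bnd W c h q \<longleftrightarrow> (\<forall>a \<in> W. int a - h \<le> c a \<and> c a \<le> int a + q - 1)"

lemma finite_win[simp]: "finite (win n c e m)" by (simp add: win_def)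

lemma chips_at_frame:
  assumes "\<forall>a. a \<notin> B \<longrightarrow> d a = c a" "B \<subseteq> chips n"
  shows "chips_at n d s = {a \<in> B. d a = s} \<union> (chips_at n c s - B)"
  using assms by (auto simp: chips_at_def)

lemma win_range:
  assumes "occ n c e m q" "a \<in> win n c e m"
  shows "e + 1 \<le> c a \<and> c a \<le> e + m"
proof -
  have "c a \<noteq> e" "c a \<noteq> e + m + 1" using assms by (auto simp: occ_def win_def chips_at_def)
  then show ?thesis using assms(2) by (auto simp: win_def)
qed

definition good :: "nat \<Rightarrow> (nat \<Rightarrow> int) \<Rightarrow> int \<Rightarrow> int \<Rightarrow> int \<Rightarrow> (nat \<Rightarrow> int) \<Rightarrow> bool" where
  "good n c e m q d \<longleftrightarrow> (topple_step n)\<^sup>*\<^sup>* c d \<and> (\<forall>a. a \<notin> win n c e m \<longrightarrow> d a = c a) \<and>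
     (\<forall>a \<in> win n c e m. e \<le> d a \<and> d a \<le> e + m + 1) \<and> inj_on d (win n c e m) \<and>
     (win n c e m = {a. e + 1 \<le> int a \<and> int a \<le> e + m + 1} \<longrightarrow>
        (sorted_on (win n c e m) d \<longleftrightarrow> bnd (win n c e m) c (m + 1 - q) q))"

lemma right_case:
  assumes e0: "0 \<le> e" and m1: "1 \<le> m" and oc: "occ n c e m m"
    and IH: "\<And>c'. 2 \<le> m \<Longrightarrow> occ n c' e (m - 1) (m - 1) \<Longrightarrow> \<exists>d. good n c' e (m - 1) (m - 1) d"
  shows "\<exists>d. good n c e m m d"
proof -
  define W where "W = win n c e m"
  have c2: "card (chips_at n c (e + m)) = 2" using oc by (simp add: occ_def)
  obtain x y where xy: "chips_at n c (e + m) = {x, y}" "x < y" using card2_pair[OF c2] by blast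
  have xyc: "x \<in> chips n" "y \<in> chips n" "c x = e + m" "c y = e + m" using xy(1) by (auto simp: chips_at_def)
  have xny: "x \<noteq> y" using xy by simp
  define c1 where "c1 = c(x := e + m - 1, y := e + m + 1)"
  have st: "topple_step n c c1" unfolding c1_def using step_of_pair[OF xy] by simp
  have ca: "\<And>s. chips_at n c1 s = (chips_at n c s - {x, y}) \<union> (if s = e + m - 1 then {x} else {}) \<union> (if s = e + m + 1 then {y} else {})"
    unfolding c1_def using chips_at_upd[OF xyc(1,2) xny] .
  have rngW: "\<forall>a \<in> W. e + 1 \<le> c a \<and> c a \<le> e + m" using win_range[OF oc] W_def by blast
  have xyW: "x \<in> W" "y \<in> W" using xyc m1 e0 by (auto simp: W_def win_def)
  show ?thesis
  proof (cases "m = 1")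
    case True
    have WW: "W = {x, y}"
    proof
      show "W \<subseteq> {x, y}"
      proof
        fix a assume a: "a \<in> W"
        then have "c a = e + m" using rngW True by force
        then have "a \<in> chips_at n c (e + m)" using a by (simp add: W_def win_def chips_at_def)
        then show "a \<in> {x, y}" using xy by simp
      qed
      show "{x, y} \<subseteq> W" using xyW by simp
    qed
    have g1: "(topple_step n)\<^sup>*\<^sup>* c c1" using st by simp
    have g2: "\<forall>a. a \<notin> W \<longrightarrow> c1 a = c a" using WW by (simp add: c1_def)
    have g3: "\<forall>a \<in> W. e \<le> c1 a \<and> c1 a \<le> e + m + 1" using WW True xny by (simp add: c1_def)
    have g4: "inj_on c1 W" using WW True xny by (simp add: c1_def)
    have g5: "W = {a. e + 1 \<le> int a \<and> int a \<le> e + m + 1} \<longrightarrow> (sorted_on W c1 \<longleftrightarrow> bnd W c (m + 1 - m) m)"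
    proof
      assume cont: "W = {a. e + 1 \<le> int a \<and> int a \<le> e + m + 1}"
      have "x \<in> {a. e + 1 \<le> int a \<and> int a \<le> e + m + 1}" "y \<in> {a. e + 1 \<le> int a \<and> int a \<le> e + m + 1}"
        using xyW cont by auto
      then have ix: "int x = e + 1" "int y = e + 2" using xy(2) True by auto
      have s: "sorted_on W c1" using WW xy(2) xny by (auto simp: sorted_on_def c1_def)
      have b: "bnd W c (m + 1 - m) m" using WW ix xyc True by (auto simp: bnd_def)
      show "sorted_on W c1 \<longleftrightarrow> bnd W c (m + 1 - m) m" using s b by simp
    qed
    show ?thesis unfolding good_def using g1 g2 g3 g4 g5 W_def by blast
  next
    case False
    then have m2: "2 \<le> m" using m1 by simp
    have xnot: "x \<notin> chips_at n c (e + m - 1)" "y \<notin> chips_at n c (e + m - 1)" using xyc by (auto simp: chips_at_def)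
    have o1: "chips_at n c1 e = {}"
    proof -
      have "chips_at n c1 e = chips_at n c e - {x, y}" using ca m2 by auto
      then show ?thesis using oc by (simp add: occ_def)
    qed
    have o2: "chips_at n c1 (e + (m - 1) + 1) = {}"
      using ca xy(1) by auto
    have o3: "card (chips_at n c1 (e + (m - 1))) = 2"
    proof -
      have eqm: "e + (m - 1) = e + m - 1" by simp
      have "chips_at n c1 (e + m - 1) = insert x (chips_at n c (e + m - 1))" using ca xnot by auto
      moreover have "card (chips_at n c (e + m - 1)) = 1" using oc m2 by (simp add: occ_def)
      ultimately have "card (chips_at n c1 (e + m - 1)) = 2" using xnot by simp
      then show ?thesis by (simp only: eqm)
    qed
    have o4: "\<forall>s. e + 1 \<le> s \<and> s \<le> e + (m - 1) \<and> s \<noteq> e + (m - 1) \<longrightarrow> card (chips_at n c1 s) = 1"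
    proof (intro allI impI)
      fix s assume s: "e + 1 \<le> s \<and> s \<le> e + (m - 1) \<and> s \<noteq> e + (m - 1)"
      have "chips_at n c s \<inter> {x, y} = {}" using xyc s by (auto simp: chips_at_def)
      then have "chips_at n c1 s = chips_at n c s" using ca s by auto
      then show "card (chips_at n c1 s) = 1" using oc s by (simp add: occ_def)
    qed
    have oc1: "occ n c1 e (m - 1) (m - 1)" using o1 o2 o3 o4 by (simp add: occ_def)
    obtain d where d: "good n c1 e (m - 1) (m - 1) d" using IH[OF m2 oc1] by blast
    define W1 where "W1 = win n c1 e (m - 1)"
    have W1e: "W1 = W - {y}"
    proof
      show "W1 \<subseteq> W - {y}" using xny xyW by (auto simp: W1_def W_def win_def c1_def split: if_splits)
      show "W - {y} \<subseteq> W1"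
      proof
        fix a assume a: "a \<in> W - {y}"
        show "a \<in> W1"
        proof (cases "a = x")
          case True then show ?thesis using xyc m2 e0 xny by (auto simp: W1_def win_def c1_def)
        next
          case False
          then have "c a \<noteq> e + m" using a xy(1) by (auto simp: chips_at_def W_def win_def)
          then have "c a \<le> e + m - 1" "e + 1 \<le> c a" using rngW a by auto
          then show ?thesis using a False by (auto simp: W1_def W_def win_def c1_def)
        qed
      qed
    qed
    have dsteps: "(topple_step n)\<^sup>*\<^sup>* c1 d" and dfr: "\<forall>a. a \<notin> W1 \<longrightarrow> d a = c1 a"
      and drng: "\<forall>a \<in> W1. e \<le> d a \<and> d a \<le> e + (m - 1) + 1" and dinj: "inj_on d W1"
      and dso: "W1 = {a. e + 1 \<le> int a \<and> int a \<le> e + (m - 1) + 1} \<longrightarrow>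
        (sorted_on W1 d \<longleftrightarrow> bnd W1 c1 ((m - 1) + 1 - (m - 1)) (m - 1))"
      using d unfolding good_def W1_def by blast+
    have dy: "d y = e + m + 1" using dfr W1e xny by (simp add: c1_def)
    have g1: "(topple_step n)\<^sup>*\<^sup>* c d" using st dsteps by simp
    have g2: "\<forall>a. a \<notin> W \<longrightarrow> d a = c a"
    proof (intro allI impI)
      fix a assume a: "a \<notin> W"
      then have "a \<notin> W1" "a \<noteq> x" "a \<noteq> y" using W1e xyW by auto
      then show "d a = c a" using dfr by (simp add: c1_def)
    qed
    have Wins: "W = insert y W1" using W1e xyW by auto
    have g3: "\<forall>a \<in> W. e \<le> d a \<and> d a \<le> e + m + 1"
      using drng dy Wins e0 m1 by auto
    have g4: "inj_on d W"
    proof -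
      have "d y \<notin> d ` W1" using drng dy by force
      moreover have "y \<notin> W1" using W1e by simp
      ultimately show ?thesis using Wins dinj by simp
    qed
    have g5: "W = {a. e + 1 \<le> int a \<and> int a \<le> e + m + 1} \<longrightarrow> (sorted_on W d \<longleftrightarrow> bnd W c (m + 1 - m) m)"
    proof
      assume cont: "W = {a. e + 1 \<le> int a \<and> int a \<le> e + m + 1}"
      define z where "z = nat (e + m + 1)"
      have iz: "int z = e + m + 1" using e0 m1 by (simp add: z_def)
      have zW: "z \<in> W" using cont iz m1 by simp
      have yle: "int y \<le> e + m + 1" using xyW cont by auto
      show "sorted_on W d \<longleftrightarrow> bnd W c (m + 1 - m) m"
      proof (cases "y = z")
        case True
        have cont1: "W1 = {a. e + 1 \<le> int a \<and> int a \<le> e + (m - 1) + 1}"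
          using cont W1e True iz by auto
        have ih: "sorted_on W1 d \<longleftrightarrow> bnd W1 c1 1 (m - 1)" using dso cont1 by simp
        have s: "sorted_on W d \<longleftrightarrow> sorted_on W1 d"
        proof
          assume "sorted_on W d" then show "sorted_on W1 d" using Wins by (auto simp: sorted_on_def)
        next
          assume s1: "sorted_on W1 d"
          have ay: "\<forall>a \<in> W1. a < y \<and> d a < d y"
          proof
            fix a assume a: "a \<in> W1"
            then have "int a \<le> e + m" using cont1 by auto
            then have "a < y" using True iz by simp
            moreover have "d a < d y" using drng a dy by auto
            ultimately show "a < y \<and> d a < d y" by simp
          qed
          show "sorted_on W d" unfolding sorted_on_def
          proof (intro ballI impI)
            fix a b assume ab: "a \<in> W" "b \<in> W" "a < b"
            show "d a < d b"
            proof (cases "b = y")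
              case True
              then have "a \<in> W1" using ab Wins by auto
              then show ?thesis using ay True by simp
            next
              case False
              then have bW1: "b \<in> W1" using ab Wins by auto
              show ?thesis
              proof (cases "a = y")
                case True then show ?thesis using ay bW1 ab by force
              next
                case False then have "a \<in> W1" using ab Wins by auto
                then show ?thesis using s1 bW1 ab by (simp add: sorted_on_def)
              qed
            qed
          qed
        qed
        have b: "bnd W c 1 m \<longleftrightarrow> bnd W1 c1 1 (m - 1)"
        proof -
          have yb: "int y - 1 \<le> c y \<and> c y \<le> int y + m - 1" using xyc True iz m1 by simp
          have eq: "\<forall>a \<in> W1. (int a - 1 \<le> c a \<and> c a \<le> int a + m - 1) \<longleftrightarrow>
                         (int a - 1 \<le> c1 a \<and> c1 a \<le> int a + (m - 1) - 1)"
          proof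
            fix a assume a: "a \<in> W1"
            have aW: "a \<in> W" using a W1e by simp
            have ia: "e + 1 \<le> int a" "int a \<le> e + m" using a cont1 by auto
            have up1: "c a \<le> int a + m - 1" using rngW aW ia by force
            have up2: "c1 a \<le> int a + (m - 1) - 1"
            proof -
              have "c1 a \<le> e + (m - 1) + 1 - 1"
                using win_range[OF oc1, of a] a W1_def by (simp add: W1_def)
              then show ?thesis using ia by simp
            qed
            show "(int a - 1 \<le> c a \<and> c a \<le> int a + m - 1) \<longleftrightarrow>
                         (int a - 1 \<le> c1 a \<and> c1 a \<le> int a + (m - 1) - 1)"
            proof (cases "a = x")
              case True
              have "int a - 1 \<le> c a" "int a - 1 \<le> c1 a" using True xyc ia xny by (simp_all add: c1_def)
              then show ?thesis using up1 up2 by simp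
            next
              case False
              then have "c1 a = c a" using a W1e by (auto simp: c1_def)
              then show ?thesis using up1 up2 by simp
            qed
          qed
          show ?thesis unfolding bnd_def using eq yb Wins by auto
        qed
        show ?thesis using s b ih by simp
      next
        case False
        then have zW1: "z \<in> W1" using zW W1e by simp
        have ylz: "y < z" using yle False iz by simp
        have ns: "\<not> sorted_on W d"
        proof
          assume "sorted_on W d"
          then have "d y < d z" using ylz zW xyW by (simp add: sorted_on_def)
          moreover have "d z \<le> e + m" using drng zW1 by auto
          ultimately show False using dy by simp
        qed
        have nb: "\<not> bnd W c 1 m"
        proof
          assume b: "bnd W c 1 m"
          have "z \<notin> chips_at n c (e + m)" using xy ylz by auto
          then have "c z \<noteq> e + m" using zW by (simp add: chips_at_def W_def win_def)
          then have "c z \<le> e + m - 1" using rngW zW by force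
          moreover have "int z - 1 \<le> c z" using b zW by (simp add: bnd_def)
          ultimately show False using iz by simp
        qed
        show ?thesis using ns nb by simp
      qed
    qed
    show ?thesis unfolding good_def using g1 g2 g3 g4 g5 W_def by blast
  qed
qed

lemma card_above:
  assumes "W = {a. e + 1 \<le> int a \<and> int a \<le> t}" "0 \<le> e"
  shows "int (card {b \<in> W. a < b}) \<le> max 0 (t - int a)"
proof -
  have "{b \<in> W. a < b} \<subseteq> {a<..nat t}" using assms by auto
  then have "card {b \<in> W. a < b} \<le> card {a<..nat t}" by (intro card_mono) auto
  then show ?thesis by auto
qed

lemma occ_one: "occ n c e m q \<Longrightarrow> e + 1 \<le> s \<Longrightarrow> s \<le> e + m \<Longrightarrow> s \<noteq> e + q \<Longrightarrow> card (chips_at n c s) = 1"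
  by (simp add: occ_def)

lemma left_case:
  assumes e0: "0 \<le> e" and q1: "1 \<le> q" and qm: "q < m" and oc: "occ n c e m q"
    and IH: "\<And>c'. occ n c' (e + 1) (m - 1) q \<Longrightarrow> \<exists>d. good n c' (e + 1) (m - 1) q d"
  shows "\<exists>d. good n c e m q d"
proof -
  define W where "W = win n c e m"
  have rngW: "\<And>a. a \<in> W \<Longrightarrow> e + 1 \<le> c a \<and> c a \<le> e + m" using win_range[OF oc] W_def by blast
  have p1: "e + 1 \<le> e + q" using q1 by simp
  have p2: "card (chips_at n c (e + q)) = 2" using oc by (simp add: occ_def)
  have p3: "\<forall>s. e + 1 \<le> s \<and> s < e + q \<longrightarrow> card (chips_at n c s) = 1" using oc qm by (simp add: occ_def)
  have p4: "chips_at n c (e + 1 - 1) = {}" using oc by (simp add: occ_def)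
  define B where "B = blk n c (e + 1) (e + q)"
  define \<mu> where "\<mu> = Min B"
  obtain d1 where d1steps: "(topple_step n)\<^sup>*\<^sup>* c d1" and d1fr: "\<forall>a. a \<notin> B \<longrightarrow> d1 a = c a"
     and d1mu: "d1 \<mu> = e + 1 - 1"
     and d1rng: "\<forall>a \<in> B - {\<mu>}. e + 1 + 1 \<le> d1 a \<and> d1 a \<le> e + q + 1"
     and d1cnt: "\<forall>s. e + 1 + 1 \<le> s \<and> s \<le> e + q + 1 \<longrightarrow> card {a \<in> B - {\<mu>}. d1 a = s} = 1"
     and d1prp: "\<forall>a \<in> B - {\<mu>}. d1 a = c a + 1 \<or>
        (d1 a \<le> c a \<and> (\<forall>b \<in> chips_at n c (e + q). a \<le> b) \<and> e + q + 1 - d1 a \<le> int (card {b \<in> B. a < b}))"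
    using pass[OF p1 p2 p3 p4] unfolding B_def \<mu>_def by blast
  have d1rng': "\<And>a. a \<in> B - {\<mu>} \<Longrightarrow> e + 2 \<le> d1 a \<and> d1 a \<le> e + q + 1"
  proof -
    fix a assume "a \<in> B - {\<mu>}"
    then have "e + 1 + 1 \<le> d1 a \<and> d1 a \<le> e + q + 1" using d1rng by blast
    then show "e + 2 \<le> d1 a \<and> d1 a \<le> e + q + 1" by simp
  qed
  have BW: "B \<subseteq> W" using q1 qm by (auto simp: B_def W_def blk_def win_def)
  have Bc: "B \<subseteq> chips n" by (auto simp: B_def blk_def)
  have fB: "finite B" by (simp add: B_def)
  have Bne: "B \<noteq> {}"
  proof -
    have "chips_at n c (e + q) \<noteq> {}" using p2 by auto
    then obtain a where "a \<in> chips_at n c (e + q)" by blast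
    then have "a \<in> B" using q1 by (auto simp: B_def blk_def chips_at_def)
    then show ?thesis by blast
  qed
  have muB: "\<mu> \<in> B" unfolding \<mu>_def using fB Bne Min_in by blast
  have muW: "\<mu> \<in> W" using muB BW by blast
  have d1mu': "d1 \<mu> = e" using d1mu by simp
  define W' where "W' = win n d1 (e + 1) (m - 1)"
  have W'e: "W' = W - {\<mu>}"
  proof
    show "W' \<subseteq> W - {\<mu>}"
    proof
      fix a assume a: "a \<in> W'"
      then have ac: "a \<in> chips n" "e + 1 \<le> d1 a" "d1 a \<le> e + m + 1" by (auto simp: W'_def win_def)
      show "a \<in> W - {\<mu>}"
      proof (cases "a \<in> B")
        case True
        then show ?thesis using BW ac d1mu' by auto
      next
        case False
        then have "d1 a = c a" using d1fr by simp
        then have "a \<in> W" using ac by (simp add: W_def win_def)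
        then show ?thesis using False muB by auto
      qed
    qed
    show "W - {\<mu>} \<subseteq> W'"
    proof
      fix a assume a: "a \<in> W - {\<mu>}"
      have ac: "a \<in> chips n" using a by (simp add: W_def win_def)
      show "a \<in> W'"
      proof (cases "a \<in> B")
        case True
        then have "e + 2 \<le> d1 a" "d1 a \<le> e + q + 1" using d1rng' a by auto
        then show ?thesis using ac qm by (simp add: W'_def win_def)
      next
        case False
        then have "d1 a = c a" using d1fr by simp
        moreover have "e + 1 \<le> c a \<and> c a \<le> e + m" using rngW a by blast
        ultimately show ?thesis using ac by (simp add: W'_def win_def)
      qed
    qed
  qed
  define A1 where "A1 s = {a \<in> B - {\<mu>}. d1 a = s}" for s
  define A2 where "A2 s = chips_at n c s - B" for s
  have cha: "\<And>s. s \<noteq> e \<Longrightarrow> chips_at n d1 s = A1 s \<union> A2 s"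
  proof -
    fix s assume s: "s \<noteq> e"
    have "chips_at n d1 s = {a \<in> B. d1 a = s} \<union> (chips_at n c s - B)" using chips_at_frame[OF d1fr Bc] .
    moreover have "{a \<in> B. d1 a = s} = A1 s" using s d1mu' by (auto simp: A1_def)
    ultimately show "chips_at n d1 s = A1 s \<union> A2 s" by (simp add: A2_def)
  qed
  have A1e: "\<And>s. s < e + 2 \<or> s > e + q + 1 \<Longrightarrow> A1 s = {}" using d1rng' by (force simp: A1_def)
  have A2e: "\<And>s. e + 1 \<le> s \<and> s \<le> e + q \<Longrightarrow> A2 s = {}" by (auto simp: A2_def B_def blk_def chips_at_def)
  have A2c: "\<And>s. s > e + q \<Longrightarrow> A2 s = chips_at n c s" by (auto simp: A2_def B_def blk_def chips_at_def)
  have A1c: "\<And>s. e + 2 \<le> s \<and> s \<le> e + q + 1 \<Longrightarrow> card (A1 s) = 1" using d1cnt by (simp add: A1_def)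
  have disj: "\<And>s. A1 s \<inter> A2 s = {}" by (auto simp: A1_def A2_def)
  have finA: "\<And>s. finite (A1 s)" "\<And>s. finite (A2 s)" by (auto simp: A1_def A2_def fB)
  have o1: "chips_at n d1 (e + 1) = {}" using cha[of "e + 1"] A1e[of "e + 1"] A2e[of "e + 1"] q1 by simp
  have o2: "chips_at n d1 (e + 1 + (m - 1) + 1) = {}"
  proof -
    have ne: "e + m + 1 \<noteq> e" using qm q1 by simp
    have "chips_at n d1 (e + m + 1) = A1 (e + m + 1) \<union> A2 (e + m + 1)" using cha[OF ne] .
    moreover have "A1 (e + m + 1) = {}" using A1e qm by simp
    moreover have "A2 (e + m + 1) = {}" using A2c[of "e + m + 1"] qm oc by (simp add: occ_def)
    ultimately have "chips_at n d1 (e + m + 1) = {}" by simp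
    then show ?thesis by simp
  qed
  have o3: "card (chips_at n d1 (e + 1 + q)) = 2"
  proof -
    have "card (A1 (e + q + 1)) = 1" using A1c q1 by simp
    moreover have "card (A2 (e + q + 1)) = 1" using A2c[of "e + q + 1"] occ_one[OF oc, of "e + q + 1"] qm q1 by simp
    moreover have "chips_at n d1 (e + q + 1) = A1 (e + q + 1) \<union> A2 (e + q + 1)" using cha q1 by simp
    ultimately have "card (chips_at n d1 (e + q + 1)) = 2"
      using card_Un_disjoint[OF finA(1) finA(2) disj] by simp
    then show ?thesis by (simp add: add.commute add.left_commute)
  qed
  have o4: "\<forall>s. e + 1 + 1 \<le> s \<and> s \<le> e + 1 + (m - 1) \<and> s \<noteq> e + 1 + q \<longrightarrow> card (chips_at n d1 s) = 1"
  proof (intro allI impI)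
    fix s assume s: "e + 1 + 1 \<le> s \<and> s \<le> e + 1 + (m - 1) \<and> s \<noteq> e + 1 + q"
    have cs: "chips_at n d1 s = A1 s \<union> A2 s" using cha s by simp
    show "card (chips_at n d1 s) = 1"
    proof (cases "s \<le> e + q")
      case True
      then show ?thesis using cs A1c[of s] A2e[of s] s by simp
    next
      case False
      then have "A1 s = {}" using A1e[of s] s by simp
      moreover have "A2 s = chips_at n c s" using A2c False by simp
      moreover have "card (chips_at n c s) = 1" using occ_one[OF oc, of s] s False by simp
      ultimately show ?thesis using cs by simp
    qed
  qed
  have oc1: "occ n d1 (e + 1) (m - 1) q" using o1 o2 o3 o4 by (simp add: occ_def)
  obtain d where d: "good n d1 (e + 1) (m - 1) q d" using IH[OF oc1] by blast
  have dsteps: "(topple_step n)\<^sup>*\<^sup>* d1 d" and dfr: "\<forall>a. a \<notin> W' \<longrightarrow> d a = d1 a"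
    and drng: "\<forall>a \<in> W'. e + 1 \<le> d a \<and> d a \<le> e + 1 + (m - 1) + 1" and dinj: "inj_on d W'"
    and dso: "W' = {a. e + 1 + 1 \<le> int a \<and> int a \<le> e + 1 + (m - 1) + 1} \<longrightarrow>
        (sorted_on W' d \<longleftrightarrow> bnd W' d1 ((m - 1) + 1 - q) q)"
    using d unfolding good_def W'_def by blast+
  have dmu: "d \<mu> = e" using dfr W'e d1mu' by simp
  have Wins: "W = insert \<mu> W'" using W'e muW by auto
  have munW': "\<mu> \<notin> W'" using W'e by simp
  have g1: "(topple_step n)\<^sup>*\<^sup>* c d" using d1steps dsteps by simp
  have g2: "\<forall>a. a \<notin> W \<longrightarrow> d a = c a"
  proof (intro allI impI)
    fix a assume a: "a \<notin> W"
    then have "a \<notin> W'" "a \<notin> B" using W'e BW by auto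
    then show "d a = c a" using dfr d1fr by simp
  qed
  have g3: "\<forall>a \<in> W. e \<le> d a \<and> d a \<le> e + m + 1"
  proof
    fix a assume "a \<in> W"
    then have "a = \<mu> \<or> a \<in> W'" using Wins by auto
    then show "e \<le> d a \<and> d a \<le> e + m + 1" using dmu drng qm q1 by auto
  qed
  have g4: "inj_on d W"
  proof -
    have "d \<mu> \<notin> d ` W'" using drng dmu by force
    then show ?thesis using Wins dinj munW' by simp
  qed
  have g5: "W = {a. e + 1 \<le> int a \<and> int a \<le> e + m + 1} \<longrightarrow> (sorted_on W d \<longleftrightarrow> bnd W c (m + 1 - q) q)"
  proof
    assume cont: "W = {a. e + 1 \<le> int a \<and> int a \<le> e + m + 1}"
    define a0 where "a0 = nat (e + 1)"
    have ia0: "int a0 = e + 1" using e0 by (simp add: a0_def)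
    have a0W: "a0 \<in> W" using cont ia0 qm q1 by simp
    have muge: "int \<mu> \<ge> e + 1" using muW cont by auto
    show "sorted_on W d \<longleftrightarrow> bnd W c (m + 1 - q) q"
    proof (cases "\<mu> = a0")
      case True
      have cont1: "W' = {a. e + 1 + 1 \<le> int a \<and> int a \<le> e + 1 + (m - 1) + 1}"
        using cont W'e True ia0 by auto
      have ih: "sorted_on W' d \<longleftrightarrow> bnd W' d1 (m - q) q" using dso cont1 by simp
      have s: "sorted_on W d \<longleftrightarrow> sorted_on W' d"
      proof
        assume "sorted_on W d" then show "sorted_on W' d" using Wins by (auto simp: sorted_on_def)
      next
        assume s1: "sorted_on W' d"
        have am: "\<forall>a \<in> W'. \<mu> < a \<and> d \<mu> < d a"
        proof
          fix a assume a: "a \<in> W'"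
          then have "int a \<ge> e + 2" using cont1 by auto
          then have "\<mu> < a" using True ia0 by simp
          moreover have "d \<mu> < d a" using drng a dmu by auto
          ultimately show "\<mu> < a \<and> d \<mu> < d a" by simp
        qed
        show "sorted_on W d" unfolding sorted_on_def
        proof (intro ballI impI)
          fix a b assume ab: "a \<in> W" "b \<in> W" "a < b"
          show "d a < d b"
          proof (cases "a = \<mu>")
            case True
            then have "b \<in> W'" using ab Wins by auto
            then show ?thesis using am True by simp
          next
            case False
            then have aW1: "a \<in> W'" using ab Wins by auto
            show ?thesis
            proof (cases "b = \<mu>")
              case True then show ?thesis using am aW1 ab by force
            next
              case False then have "b \<in> W'" using ab Wins by auto
              then show ?thesis using s1 aW1 ab by (simp add: sorted_on_def)
            qed
          qed
        qed
      qed
      have b: "bnd W c (m + 1 - q) q \<longleftrightarrow> bnd W' d1 (m - q) q"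
      proof -
        have mub: "int \<mu> - (m + 1 - q) \<le> c \<mu> \<and> c \<mu> \<le> int \<mu> + q - 1"
          using muB True ia0 qm by (auto simp: B_def blk_def)
        have eq: "\<forall>a \<in> W'. (int a - (m + 1 - q) \<le> c a \<and> c a \<le> int a + q - 1) \<longleftrightarrow>
                         (int a - (m - q) \<le> d1 a \<and> d1 a \<le> int a + q - 1)"
        proof
          fix a assume a: "a \<in> W'"
          have aW: "a \<in> W" using a W'e by simp
          have ia: "e + 2 \<le> int a" "int a \<le> e + m + 1" using a cont1 by auto
          have ca: "e + 1 \<le> c a" "c a \<le> e + m" using rngW aW by auto
          show "(int a - (m + 1 - q) \<le> c a \<and> c a \<le> int a + q - 1) \<longleftrightarrow>
                         (int a - (m - q) \<le> d1 a \<and> d1 a \<le> int a + q - 1)"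
          proof (cases "a \<in> B")
            case False
            then have "d1 a = c a" using d1fr by simp
            moreover have "c a > e + q" using False ca aW by (auto simp: B_def blk_def W_def win_def)
            ultimately show ?thesis using ia by auto
          next
            case True
            then have aB: "a \<in> B - {\<mu>}" using a munW' by auto
            have cle: "c a \<le> e + q" using True by (simp add: B_def blk_def)
            have dle: "d1 a \<le> e + q + 1" using d1rng' aB by auto
            have up: "c a \<le> int a + q - 1" "d1 a \<le> int a + q - 1" using cle dle ia by auto
            from d1prp aB
            have "d1 a = c a + 1 \<or>
              (d1 a \<le> c a \<and> (\<forall>b \<in> chips_at n c (e + q). a \<le> b) \<and> e + q + 1 - d1 a \<le> int (card {b \<in> B. a < b}))"
              by blast
            then show ?thesis
            proof
              assume "d1 a = c a + 1" then show ?thesis using up by auto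
            next
              assume h: "d1 a \<le> c a \<and> (\<forall>b \<in> chips_at n c (e + q). a \<le> b) \<and> e + q + 1 - d1 a \<le> int (card {b \<in> B. a < b})"
              have "card {b \<in> B. a < b} \<le> card {b \<in> W. a < b}"
                using BW by (intro card_mono) (auto simp: W_def)
              moreover have "int (card {b \<in> W. a < b}) \<le> max 0 (e + m + 1 - int a)"
                using card_above[OF cont e0] .
              ultimately have "e + q + 1 - d1 a \<le> max 0 (e + m + 1 - int a)" using h by linarith
              then have "int a - (m - q) \<le> d1 a" using ia dle qm by (auto simp: max_def split: if_splits)
              then show ?thesis using h up by auto
            qed
          qed
        qed
        show ?thesis unfolding bnd_def using eq mub Wins by auto
      qed
      show ?thesis using s b ih by simp
    next
      case False
      have a0B: "a0 \<notin> B"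
      proof
        assume "a0 \<in> B"
        then have "\<mu> \<le> a0" unfolding \<mu>_def using fB by simp
        then show False using muge ia0 False by simp
      qed
      have a0W': "a0 \<in> W'" using a0W W'e False by simp
      have ns: "\<not> sorted_on W d"
      proof
        assume "sorted_on W d"
        moreover have "a0 < \<mu>" using muge ia0 False by simp
        ultimately have "d a0 < d \<mu>" using a0W muW by (simp add: sorted_on_def)
        moreover have "d a0 \<ge> e + 1" using drng a0W' by auto
        ultimately show False using dmu by simp
      qed
      have nb: "\<not> bnd W c (m + 1 - q) q"
      proof
        assume b: "bnd W c (m + 1 - q) q"
        have "c a0 > e + q" using a0B rngW a0W by (auto simp: B_def blk_def W_def win_def)
        moreover have "c a0 \<le> int a0 + q - 1" using b a0W by (simp add: bnd_def)
        ultimately show False using ia0 by simp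
      qed
      show ?thesis using ns nb by simp
    qed
  qed
  show ?thesis unfolding good_def using g1 g2 g3 g4 g5 W_def by blast
qed

lemma main:
  assumes "0 \<le> e" "1 \<le> q" "q \<le> m" "occ n c e m q"
  shows "\<exists>d. good n c e m q d"
  using assms
proof (induction "nat m" arbitrary: c e m q rule: less_induct)
  case less
  show ?case
  proof (cases "q = m")
    case True
    have IH: "\<And>c'. 2 \<le> m \<Longrightarrow> occ n c' e (m - 1) (m - 1) \<Longrightarrow> \<exists>d. good n c' e (m - 1) (m - 1) d"
      using less by (intro less.hyps) auto
    show ?thesis using right_case[OF less(2) _ _ IH] less True by simp
  next
    case False
    have IH: "\<And>c'. occ n c' (e + 1) (m - 1) q \<Longrightarrow> \<exists>d. good n c' (e + 1) (m - 1) q d"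
      using less False by (intro less.hyps) auto
    show ?thesis using left_case[OF less(2,3) _ less(5) IH] less False by simp
  qed
qed

lemma config_card:
  assumes "config_S n p c" "1 \<le> p" "p \<le> n"
  shows "card (chips_at n c s) = (if s = int p then 2 else if 1 \<le> s \<and> s \<le> int n then 1 else 0)"
proof -
  have pie: "c \<in> chips n \<rightarrow>\<^sub>E {0..int n + 1}" using assms(1) by (simp add: config_S_def)
  consider "s = int p" | "s \<noteq> int p" "1 \<le> s \<and> s \<le> int n" | "s = 0" | "s = int n + 1" | "s < 0 \<or> s > int n + 1"
    by linarith
  then show ?thesis
  proof cases
    case 1 then show ?thesis using assms(1) by (simp add: config_S_def)
  next
    case 2 then show ?thesis using assms(1) by (simp add: config_S_def)
  next
    case 3 then show ?thesis using assms(1,2) by (simp add: config_S_def)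
  next
    case 4 then show ?thesis using assms(1,3) by (simp add: config_S_def)
  next
    case 5
    then have "chips_at n c s = {}" using pie by (force simp: chips_at_def PiE_def Pi_def)
    then show ?thesis using 5 assms(2,3) by auto
  qed
qed

lemma config_below:
  assumes "config_S n p c" "1 \<le> p" "p \<le> n"
  shows "int (below n c (int k - 1)) =
     (if int k - 1 < 0 then 0 else if int k - 1 < int p then int k - 1
      else if int k - 1 \<le> int n then int k else int n + 1)"
proof (induction k)
  case 0
  have pie: "c \<in> chips n \<rightarrow>\<^sub>E {0..int n + 1}" using assms(1) by (simp add: config_S_def)
  then have "\<forall>a \<in> chips n. 0 \<le> c a" by (auto simp: PiE_def Pi_def)
  then show ?case using below_neg[of n c "-1"] by simp
next
  case (Suc k)
  have sp: "below n c (int (Suc k) - 1) = below n c (int k - 1) + card (chips_at n c (int k))"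
    using below_split[of n c "int k"] by simp
  have cc: "card (chips_at n c (int k)) = (if int k = int p then 2 else if 1 \<le> int k \<and> int k \<le> int n then 1 else 0)"
    using config_card[OF assms] .
  show ?case
  proof (cases "int k \<le> int n + 1")
    case True
    then show ?thesis using sp cc Suc assms(2,3) by auto
  next
    case False
    then have "int k - 1 \<ge> int n + 1" by simp
    have pie: "c \<in> chips n \<rightarrow>\<^sub>E {0..int n + 1}" using assms(1) by (simp add: config_S_def)
    then have "\<forall>a \<in> chips n. c a \<le> int n + 1" by (auto simp: PiE_def Pi_def)
    then have "below n c (int (Suc k) - 1) = n + 1" using below_top[of n c] False by simp
    then show ?thesis using False assms(3) by simp
  qed
qed

lemma config_Inv:
  assumes "config_S n p c" "1 \<le> p" "p \<le> n"
  shows "Inv n c"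
proof -
  have pie: "c \<in> chips n \<rightarrow>\<^sub>E {0..int n + 1}" using assms(1) by (simp add: config_S_def)
  then have r: "\<forall>a \<in> chips n. 0 \<le> c a \<and> c a \<le> int n + 1" by (auto simp: PiE_def Pi_def)
  have "\<forall>j. -1 \<le> j \<and> j \<le> int n + 1 \<longrightarrow> int (below n c j) = j \<or> int (below n c j) = j + 1"
  proof (intro allI impI)
    fix j :: int assume j: "-1 \<le> j \<and> j \<le> int n + 1"
    define k where "k = nat (j + 1)"
    have jk: "j = int k - 1" using j by (simp add: k_def)
    show "int (below n c j) = j \<or> int (below n c j) = j + 1"
      using config_below[OF assms, of k] jk j by auto
  qed
  then show ?thesis using r by (simp add: Inv_def)
qed

lemma config_occ:
  assumes "config_S n p c" "1 \<le> p" "p \<le> n"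
  shows "occ n c 0 (int n) (int p)"
proof -
  note cc = config_card[OF assms]
  have "chips_at n c 0 = {}" using cc[of 0] assms(2) by (simp add: card_eq_0_iff)
  moreover have "chips_at n c (int n + 1) = {}" using cc[of "int n + 1"] assms(3) by (simp add: card_eq_0_iff)
  moreover have "card (chips_at n c (int p)) = 2" using cc by simp
  moreover have "\<forall>s. 1 \<le> s \<and> s \<le> int n \<and> s \<noteq> int p \<longrightarrow> card (chips_at n c s) = 1" using cc by simp
  ultimately show ?thesis by (simp add: occ_def)
qed

lemma toppleable_iff:
  assumes "config_S n p c" "1 \<le> p" "p \<le> n"
  shows "toppleable n c \<longleftrightarrow> bnd (chips n) c (int n + 1 - int p) (int p)"
proof -
  obtain d where d: "good n c 0 (int n) (int p) d"
    using main[OF _ _ _ config_occ[OF assms]] assms by auto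
  have pie: "c \<in> chips n \<rightarrow>\<^sub>E {0..int n + 1}" using assms(1) by (simp add: config_S_def)
  have W: "win n c 0 (int n) = chips n" using pie by (auto simp: win_def PiE_def Pi_def)
  have cont: "chips n = {a. 0 + 1 \<le> int a \<and> int a \<le> 0 + int n + 1}"
    by (auto simp: chips_def)
  have dsteps: "(topple_step n)\<^sup>*\<^sup>* c d" and dinj: "inj_on d (chips n)"
    and deq: "sorted_on (chips n) d \<longleftrightarrow> bnd (chips n) c (int n + 1 - int p) (int p)"
    using d cont unfolding good_def W by auto
  have dterm: "terminal n d" using inj_terminal[OF dinj] .
  have inv: "Inv n c" using config_Inv[OF assms] .
  have idf: "identity_final n d \<longleftrightarrow> sorted_on (chips n) d"
    by (simp add: identity_final_def sorted_on_def)
  show ?thesis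
  proof
    assume "toppleable n c"
    then obtain c' where c': "(topple_step n)\<^sup>*\<^sup>* c c'" "identity_final n c'" by (auto simp: toppleable_def)
    have "c' = d" using unique_terminal[OF inv c'(1) dsteps identity_terminal[OF c'(2)] dterm] .
    then show "bnd (chips n) c (int n + 1 - int p) (int p)" using c'(2) idf deq by simp
  next
    assume "bnd (chips n) c (int n + 1 - int p) (int p)"
    then have "identity_final n d" using idf deq by simp
    then show "toppleable n c" using dsteps by (auto simp: toppleable_def)
  qed
qed


theorem theorem2p4:
  fixes n p :: nat
  assumes "1 \<le> n" and "1 \<le> p" and "p \<le> n"
  shows "real (card {c. config_S n p c \<and> toppleable n c}) = real (polyB (n - p + 1) p) / 2"
proof -
  have eq: "{c. config_S n p c \<and> toppleable n c} = Xset n p"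
  proof
    show "{c. config_S n p c \<and> toppleable n c} \<subseteq> Xset n p"
      using toppleable_iff[OF _ assms(2,3)] by (auto simp: Xset_def bnd_def)
    show "Xset n p \<subseteq> {c. config_S n p c \<and> toppleable n c}"
      using toppleable_iff[OF _ assms(2,3)] by (auto simp: Xset_def bnd_def)
  qed
  have "2 * card (Xset n p) = polyB (n + 1 - p) p" using card_X[OF assms(2,3)] .
  moreover have "n - p + 1 = n + 1 - p" using assms(3) by simp
  ultimately have "real (2 * card (Xset n p)) = real (polyB (n - p + 1) p)" by simp
  then show ?thesis using eq by simp
qed

end
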